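(* For $n\ge2$, $$a_n=\sum_{\substack{k\ge1,\ x_1,\dots,x_k\ge1\\ x_1+\cdots+x_k=n-1}} s_{x_1+1}\,s_{x_2+1}\cdots s_{x_k+1},$$ the sum being over all compositions $(x_1,\dots,x_k)$ of $n-1$ into positive parts.
   Context: $a_n=|\mathcal A_n|$ and $s_n$ is the number of simple permutations in $\mathcal A_n$. Here $\mathcal A_{n}$ is the set of permutations $w\in S_{n}$ (one-line notation $w_1\cdots w_n$) avoiding all six vincular patterns below, where $w$ contains - $\underline{32}\,\underline{41}$ if there are $i,j$ with $i+2\le j\le n-1$ and $w_{j+1}<w_{i+1}<w_i<w_j$; - $\underline{14}\,\underline{23}$ if there are such $i,j$ with $w_i<w_j<w_{j+1}<w_{i+1}$; - $\underline{41}\,\underline{32}$ if there are such $i,j$ with $w_{i+1}<w_{j+1}<w_j<w_i$; - $\underline{23}\,\underline{14}$ if there are such $i,j$ with $w_j<w_i<w_{i+1}<w_{j+1}$; - $\underline{23}\,\underline{1}$ if there is $i$ with $i+1\le n-1$ and $w_n<w_i<w_{i+1}$; - $\underline{1}\,\underline{32}$ if there is $j$ with $2\le j\le n-1$ and $w_1<w_{j+1}<w_j$. A permutation $\pi\in S_n$ is simple if there is no interval of positions $\{i,\dots,j\}$ with $2\le j-i+1\le n-1$ such that $\{\pi_i,\dots,\pi_j\}$ is a set of consecutive integers. *)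

theory Defs
  imports "HOL-Combinatorics.Multiset_Permutations"
begin

text \<open>Permutations of [n] in one-line notation are lists w with w ! (i-1) = w_i.\<close>

definition ent :: "nat list \<Rightarrow> nat \<Rightarrow> nat" where
  "ent w i = w ! (i - 1)"

definition contains_3241 :: "nat list \<Rightarrow> bool" where
  "contains_3241 w \<longleftrightarrow> (\<exists>i j. 1 \<le> i \<and> i + 2 \<le> j \<and> j \<le> length w - 1 \<and>
     ent w (j+1) < ent w (i+1) \<and> ent w (i+1) < ent w i \<and> ent w i < ent w j)"

definition contains_1423 :: "nat list \<Rightarrow> bool" where
  "contains_1423 w \<longleftrightarrow> (\<exists>i j. 1 \<le> i \<and> i + 2 \<le> j \<and> j \<le> length w - 1 \<and>
     ent w i < ent w j \<and> ent w j < ent w (j+1) \<and> ent w (j+1) < ent w (i+1))"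

definition contains_4132 :: "nat list \<Rightarrow> bool" where
  "contains_4132 w \<longleftrightarrow> (\<exists>i j. 1 \<le> i \<and> i + 2 \<le> j \<and> j \<le> length w - 1 \<and>
     ent w (i+1) < ent w (j+1) \<and> ent w (j+1) < ent w j \<and> ent w j < ent w i)"

definition contains_2314 :: "nat list \<Rightarrow> bool" where
  "contains_2314 w \<longleftrightarrow> (\<exists>i j. 1 \<le> i \<and> i + 2 \<le> j \<and> j \<le> length w - 1 \<and>
     ent w j < ent w i \<and> ent w i < ent w (i+1) \<and> ent w (i+1) < ent w (j+1))"

definition contains_231 :: "nat list \<Rightarrow> bool" where
  "contains_231 w \<longleftrightarrow> (\<exists>i. 1 \<le> i \<and> i + 1 \<le> length w - 1 \<and>
     ent w (length w) < ent w i \<and> ent w i < ent w (i+1))"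

definition contains_132 :: "nat list \<Rightarrow> bool" where
  "contains_132 w \<longleftrightarrow> (\<exists>j. 2 \<le> j \<and> j \<le> length w - 1 \<and>
     ent w 1 < ent w (j+1) \<and> ent w (j+1) < ent w j)"

definition avoids_all :: "nat list \<Rightarrow> bool" where
  "avoids_all w \<longleftrightarrow> \<not> contains_3241 w \<and> \<not> contains_1423 w \<and> \<not> contains_4132 w \<and>
     \<not> contains_2314 w \<and> \<not> contains_231 w \<and> \<not> contains_132 w"

definition A_set :: "nat \<Rightarrow> nat list set" where
  "A_set n = {w \<in> permutations_of_set {1..n}. avoids_all w}"

definition is_simple :: "nat list \<Rightarrow> bool" where
  "is_simple w \<longleftrightarrow> \<not> (\<exists>i j. 1 \<le> i \<and> j \<le> length w \<and> 2 \<le> j - i + 1 \<and> j - i + 1 \<le> length w - 1 \<and>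
      (\<exists>m. ent w ` {i..j} = {m..<m + (j - i + 1)}))"

definition a_seq :: "nat \<Rightarrow> nat" where
  "a_seq n = card (A_set n)"

definition s_seq :: "nat \<Rightarrow> nat" where
  "s_seq n = card {w \<in> A_set n. is_simple w}"

definition compositions :: "nat \<Rightarrow> nat list set" where
  "compositions m = {xs. xs \<noteq> [] \<and> (\<forall>x\<in>set xs. 1 \<le> x) \<and> sum_list xs = m}"

end

theory Submission
  imports Defs
begin

definition P4 :: "nat \<Rightarrow> nat \<Rightarrow> nat \<Rightarrow> nat \<Rightarrow> bool" where
  "P4 a b c d \<longleftrightarrow> (d<b \<and> b<a \<and> a<c) \<or> (a<c \<and> c<d \<and> d<b) \<or> (b<d \<and> d<c \<and> c<a) \<or> (c<a \<and> a<b \<and> b<d)"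

definition av :: "nat list \<Rightarrow> bool" where
  "av w \<longleftrightarrow> (\<forall>i j. i+2 \<le> j \<longrightarrow> j+1 < length w \<longrightarrow> \<not> P4 (w!i) (w!(i+1)) (w!j) (w!(j+1))) \<and>
    (\<forall>i. i+2 < length w \<longrightarrow> \<not> (w!(length w - 1) < w!i \<and> w!i < w!(i+1))) \<and>
    (\<forall>j. 1 \<le> j \<longrightarrow> j+1 < length w \<longrightarrow> \<not> (w!0 < w!(j+1) \<and> w!(j+1) < w!j))"

lemma av_eq: "avoids_all w \<longleftrightarrow> av w"
proof -
  have e: "\<And>i. i \<ge> 1 \<Longrightarrow> ent w i = w!(i-1)" by (simp add: ent_def)
  have c4: "(contains_3241 w \<or> contains_1423 w \<or> contains_4132 w \<or> contains_2314 w) \<longleftrightarrow>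
     (\<exists>i j. i+2 \<le> j \<and> j+1 < length w \<and> P4 (w!i) (w!(i+1)) (w!j) (w!(j+1)))"
  proof
    assume "contains_3241 w \<or> contains_1423 w \<or> contains_4132 w \<or> contains_2314 w"
    then obtain i j where ij: "1 \<le> i" "i+2 \<le> j" "j \<le> length w - 1" and
      P: "P4 (ent w i) (ent w (i+1)) (ent w j) (ent w (j+1))"
      unfolding contains_3241_def contains_1423_def contains_4132_def contains_2314_def P4_def
      by blast
    show "\<exists>i j. i+2 \<le> j \<and> j+1 < length w \<and> P4 (w!i) (w!(i+1)) (w!j) (w!(j+1))"
      apply (rule exI[of _ "i-1"], rule exI[of _ "j-1"])
      using ij P by (simp add: ent_def) arith
  next
    assume "\<exists>i j. i+2 \<le> j \<and> j+1 < length w \<and> P4 (w!i) (w!(i+1)) (w!j) (w!(j+1))"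
    then obtain i j where ij: "i+2 \<le> j" "j+1 < length w" and P: "P4 (w!i) (w!(i+1)) (w!j) (w!(j+1))" by blast
    have P': "P4 (ent w (i+1)) (ent w (i+1+1)) (ent w (j+1)) (ent w (j+1+1))"
      using P by (simp add: ent_def)
    have ij': "1 \<le> i+1" "i+1+2 \<le> j+1" "j+1 \<le> length w - 1" using ij by auto
    show "contains_3241 w \<or> contains_1423 w \<or> contains_4132 w \<or> contains_2314 w"
      using P' ij' unfolding contains_3241_def contains_1423_def contains_4132_def contains_2314_def P4_def
      by blast
  qed
  have c2: "contains_231 w \<longleftrightarrow> (\<exists>i. i+2 < length w \<and> w!(length w - 1) < w!i \<and> w!i < w!(i+1))"
  proof
    assume "contains_231 w"
    then obtain i where "1 \<le> i" "i+1 \<le> length w - 1" "ent w (length w) < ent w i" "ent w i < ent w (i+1)"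
      unfolding contains_231_def by blast
    then show "\<exists>i. i+2 < length w \<and> w!(length w - 1) < w!i \<and> w!i < w!(i+1)"
      by (intro exI[of _ "i-1"]) (simp add: ent_def)
  next
    assume "\<exists>i. i+2 < length w \<and> w!(length w - 1) < w!i \<and> w!i < w!(i+1)"
    then obtain i where "i+2 < length w" "w!(length w - 1) < w!i" "w!i < w!(i+1)" by blast
    then show "contains_231 w" unfolding contains_231_def
      by (intro exI[of _ "i+1"]) (simp add: ent_def)
  qed
  have c1: "contains_132 w \<longleftrightarrow> (\<exists>j. 1 \<le> j \<and> j+1 < length w \<and> w!0 < w!(j+1) \<and> w!(j+1) < w!j)"
  proof
    assume "contains_132 w"
    then obtain j where "2 \<le> j" "j \<le> length w - 1" "ent w 1 < ent w (j+1)" "ent w (j+1) < ent w j"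
      unfolding contains_132_def by blast
    then show "\<exists>j. 1 \<le> j \<and> j+1 < length w \<and> w!0 < w!(j+1) \<and> w!(j+1) < w!j"
      by (intro exI[of _ "j-1"]) (simp add: ent_def, arith)
  next
    assume "\<exists>j. 1 \<le> j \<and> j+1 < length w \<and> w!0 < w!(j+1) \<and> w!(j+1) < w!j"
    then obtain j where "1 \<le> j" "j+1 < length w" "w!0 < w!(j+1)" "w!(j+1) < w!j" by blast
    then show "contains_132 w" unfolding contains_132_def
      by (intro exI[of _ "j+1"]) (simp add: ent_def)
  qed
  show ?thesis unfolding avoids_all_def av_def using c4 c2 c1 by blast
qed

definition intv :: "nat list \<Rightarrow> nat \<Rightarrow> nat \<Rightarrow> bool" where
  "intv w a b \<longleftrightarrow> a < b \<and> b < length w \<and> b - a + 1 \<le> length w - 1 \<and>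
     (\<exists>c. (\<lambda>i. w!i) ` {a..b} = {c..<c+(b-a+1)})"

lemma simple_eq: "is_simple w \<longleftrightarrow> \<not> (\<exists>a b. intv w a b)"
proof -
  have "(\<exists>i j. 1 \<le> i \<and> j \<le> length w \<and> 2 \<le> j - i + 1 \<and> j - i + 1 \<le> length w - 1 \<and>
      (\<exists>m. ent w ` {i..j} = {m..<m + (j - i + 1)})) \<longleftrightarrow> (\<exists>a b. intv w a b)"
  proof
    assume "\<exists>i j. 1 \<le> i \<and> j \<le> length w \<and> 2 \<le> j - i + 1 \<and> j - i + 1 \<le> length w - 1 \<and>
      (\<exists>m. ent w ` {i..j} = {m..<m + (j - i + 1)})"
    then obtain i j c where h: "1 \<le> i" "j \<le> length w" "2 \<le> j - i + 1" "j - i + 1 \<le> length w - 1"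
      "ent w ` {i..j} = {c..<c + (j - i + 1)}" by blast
    have "ent w ` {i..j} = (\<lambda>x. w!x) ` {i-1..j-1}"
    proof -
      have "(\<lambda>x. x - 1) ` {i..j} = {i-1..j-1}" using h(1) h(3)
        apply (auto simp: image_iff)
        subgoal for x by (rule bexI[of _ "Suc x"]) auto
        done
      then have "(\<lambda>x. w!x) ` ((\<lambda>x. x - 1) ` {i..j}) = (\<lambda>x. w!x) ` {i-1..j-1}" by simp
      then show ?thesis by (simp add: ent_def image_image)
    qed
    then have "intv w (i-1) (j-1)" unfolding intv_def using h by (auto intro!: exI[of _ c])
    then show "\<exists>a b. intv w a b" by blast
  next
    assume "\<exists>a b. intv w a b"
    then obtain a b c where h: "a < b" "b < length w" "b - a + 1 \<le> length w - 1"
       "(\<lambda>i. w!i) ` {a..b} = {c..<c+(b-a+1)}" unfolding intv_def by blast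
    have "ent w ` {a+1..b+1} = (\<lambda>x. w!x) ` {a..b}"
    proof -
      have "(\<lambda>x. x - 1) ` {a+1..b+1} = {a..b}"
        apply (auto simp: image_iff)
        subgoal for x by (rule bexI[of _ "Suc x"]) auto
        done
      then have "(\<lambda>x. w!x) ` ((\<lambda>x. x - 1) ` {a+1..b+1}) = (\<lambda>x. w!x) ` {a..b}" by simp
      then show ?thesis by (simp add: ent_def image_image)
    qed
    then show "\<exists>i j. 1 \<le> i \<and> j \<le> length w \<and> 2 \<le> j - i + 1 \<and> j - i + 1 \<le> length w - 1 \<and>
      (\<exists>m. ent w ` {i..j} = {m..<m + (j - i + 1)})"
      using h by (intro exI[of _ "a+1"] exI[of _ "b+1"]) auto
  qed
  then show ?thesis unfolding is_simple_def by blast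
qed


lemma P4_cong:
  assumes "d<b \<longleftrightarrow> d'<b'" "b<a \<longleftrightarrow> b'<a'" "a<c \<longleftrightarrow> a'<c'" "c<d \<longleftrightarrow> c'<d'"
    "b<d \<longleftrightarrow> b'<d'" "d<c \<longleftrightarrow> d'<c'" "c<a \<longleftrightarrow> c'<a'" "a<b \<longleftrightarrow> a'<b'"
  shows "P4 a b c d = P4 a' b' c' d'"
  using assms unfolding P4_def by blast

locale infl =
  fixes u v t :: "nat list"
  assumes t_ne: "t \<noteq> []"
    and u_ge: "\<forall>x\<in>set u. 2 \<le> x" and v_ge: "\<forall>x\<in>set v. 2 \<le> x"
    and t_rng: "\<forall>x\<in>set t. 1 \<le> x \<and> x \<le> length t"
begin

definition m where "m = length t"
definition p where "p = length u"
definition sh :: "nat \<Rightarrow> nat" where "sh x = x + m - 1"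
definition w where "w = map sh u @ t @ map sh v"
definition sg where "sg = u @ 1 # v"
definition k where "k = length sg"
definition n where "n = length w"
definition col :: "nat \<Rightarrow> nat" where "col y = (if y < p then y else if y < p+m then p else y + 1 - m)"
definition psi :: "nat \<Rightarrow> nat" where "psi i = (if i < p then i else i + m - 1)"

lemma m_pos: "1 \<le> m" using t_ne by (simp add: m_def Suc_le_eq)
lemma k_eq: "k = p + 1 + length v" by (simp add: k_def sg_def p_def)
lemma n_eq: "n = p + m + length v" by (simp add: n_def w_def p_def m_def)
lemma n_k: "n = k + m - 1" using k_eq n_eq m_pos by simp

lemma sg_p: "sg!p = 1" by (simp add: sg_def p_def)
lemma sg_nth: "x < k \<Longrightarrow> sg!x = (if x < p then u!x else if x = p then 1 else v!(x-p-1))"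
  by (auto simp: sg_def p_def k_eq nth_append nth_Cons' )
lemma sg_ge: "x < k \<Longrightarrow> x \<noteq> p \<Longrightarrow> 2 \<le> sg!x"
  using u_ge v_ge by (auto simp: sg_nth k_eq p_def)
lemma sg_pos: "x < k \<Longrightarrow> 1 \<le> sg!x"
  using sg_ge[of x] sg_p by (cases "x = p") auto

lemma w_nth: "y < n \<Longrightarrow> w!y = (if y < p then sh (u!y) else if y < p+m then t!(y-p) else sh (v!(y-p-m)))"
  by (auto simp: w_def p_def m_def n_eq nth_append)

lemma blk_val: "p \<le> y \<Longrightarrow> y < p+m \<Longrightarrow> w!y = t!(y-p) \<and> 1 \<le> w!y \<and> w!y \<le> m"
proof -
  assume a: "p \<le> y" "y < p+m"
  then have "y < n" using n_eq by simp
  then have "w!y = t!(y-p)" using a by (simp add: w_nth)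
  moreover have "t!(y-p) \<in> set t" using a by (simp add: m_def)
  ultimately show ?thesis using t_rng by (simp add: m_def)
qed

lemma col_lt: "y < n \<Longrightarrow> col y < k"
  using m_pos by (auto simp: col_def n_eq k_eq)

lemma col_p: "y < n \<Longrightarrow> col y = p \<longleftrightarrow> (p \<le> y \<and> y < p+m)"
  using m_pos by (auto simp: col_def)

lemma w_out: "y < n \<Longrightarrow> \<not> (p \<le> y \<and> y < p+m) \<Longrightarrow> w!y = sg!(col y) + m - 1 \<and> 2 \<le> sg!(col y)"
proof -
  assume a: "y < n" "\<not> (p \<le> y \<and> y < p+m)"
  have c: "col y < k" "col y \<noteq> p" using col_lt col_p a by auto
  have "w!y = sg!(col y) + m - 1"
  proof (cases "y < p")
    case True
    then have "col y = y" by (simp add: col_def)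
    then have "y < k" using c by simp
    then show ?thesis using a True \<open>col y = y\<close> by (simp add: w_nth sg_nth sh_def)
  next
    case False
    then have "y \<ge> p+m" using a by simp
    moreover have "col y = y + 1 - m" using False a by (simp add: col_def)
    ultimately show ?thesis using a m_pos c by (simp add: w_nth sg_nth sh_def add.commute)
  qed
  then show ?thesis using sg_ge c by simp
qed

lemma cmp: assumes "y < n" "y' < n" "col y \<noteq> col y'"
  shows "w!y < w!y' \<longleftrightarrow> sg!(col y) < sg!(col y')"
proof (cases "p \<le> y \<and> y < p+m")
  case True
  then have "col y = p" using col_p assms by simp
  have y': "\<not> (p \<le> y' \<and> y' < p+m)"
  proof
    assume "p \<le> y' \<and> y' < p+m"
    then have "col y' = p" using col_p assms(2) by blast
    then show False using \<open>col y = p\<close> assms(3) by simp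
  qed
  show ?thesis using blk_val[of y] True w_out[OF assms(2) y'] \<open>col y = p\<close> sg_p by auto
next
  case False
  note yo = w_out[OF assms(1) False]
  show ?thesis
  proof (cases "p \<le> y' \<and> y' < p+m")
    case True
    then have "col y' = p" using col_p assms by simp
    then show ?thesis using blk_val[of y'] True yo sg_p by auto
  next
    case False
    then show ?thesis using yo w_out[OF assms(2) False] by auto
  qed
qed

lemma cmpI: "y < n \<Longrightarrow> y' < n \<Longrightarrow> col y = x \<Longrightarrow> col y' = x' \<Longrightarrow> x \<noteq> x' \<Longrightarrow>
  (w!y < w!y' \<longleftrightarrow> sg!x < sg!x')"
  using cmp by blast

lemma col_mono: "y \<le> y' \<Longrightarrow> col y \<le> col y'"
  by (auto simp: col_def)

lemma col_strict: "y < y' \<Longrightarrow> \<not> ((p \<le> y \<and> y < p+m) \<and> (p \<le> y' \<and> y' < p+m)) \<Longrightarrow> col y < col y'"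
  by (auto simp: col_def)

lemma col_suc: "\<not> ((p \<le> y \<and> y < p+m) \<and> (p \<le> y+1 \<and> y+1 < p+m)) \<Longrightarrow> col (y+1) = col y + 1"
  using m_pos by (auto simp: col_def)

lemma col_0: "col 0 = 0" using m_pos by (auto simp: col_def)
lemma col_last: "col (n-1) = k-1"
  unfolding col_def n_eq k_eq using m_pos by (cases "length v") auto

lemma psi_col: "i < k \<Longrightarrow> col (psi i) = i \<and> psi i < n"
  using m_pos by (auto simp: col_def psi_def n_eq k_eq)
lemma psi_col1: "i + 1 < k \<Longrightarrow> col (psi i + 1) = i + 1 \<and> psi i + 1 < n"
  using m_pos by (auto simp: col_def psi_def n_eq k_eq)
lemma psi_mono: "i + 2 \<le> j \<Longrightarrow> psi i + 2 \<le> psi j"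
  using m_pos by (auto simp: psi_def)

end

context infl begin

lemma len_w: "length w = n" by (simp add: n_def)
lemma len_sg: "length sg = k" by (simp add: k_def)
lemma len_t: "length t = m" by (simp add: m_def)

lemma P4_tr:
  assumes "y1 < n" "y2 < n" "y3 < n" "y4 < n" "col y1 = x1" "col y2 = x2" "col y3 = x3" "col y4 = x4"
    "distinct [x1,x2,x3,x4]"
  shows "P4 (w!y1) (w!y2) (w!y3) (w!y4) = P4 (sg!x1) (sg!x2) (sg!x3) (sg!x4)"
proof -
  have c: "\<And>y y' x x'. y < n \<Longrightarrow> y' < n \<Longrightarrow> col y = x \<Longrightarrow> col y' = x' \<Longrightarrow> x \<noteq> x' \<Longrightarrow>
    (w!y < w!y' \<longleftrightarrow> sg!x < sg!x')" using cmpI by blast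
  show ?thesis
    using assms by (intro P4_cong c) auto
qed

lemma B_sg: assumes "av w" shows "av sg"
proof -
  have A1: "\<And>i j. i+2 \<le> j \<Longrightarrow> j+1 < n \<Longrightarrow> \<not> P4 (w!i) (w!(i+1)) (w!j) (w!(j+1))"
   and A2: "\<And>i. i+2 < n \<Longrightarrow> \<not> (w!(n - 1) < w!i \<and> w!i < w!(i+1))"
   and A3: "\<And>j. 1 \<le> j \<Longrightarrow> j+1 < n \<Longrightarrow> \<not> (w!0 < w!(j+1) \<and> w!(j+1) < w!j)"
    using assms unfolding av_def len_w by blast+
  have G1: "\<not> P4 (sg!i) (sg!(i+1)) (sg!j) (sg!(j+1))" if ij: "i+2 \<le> j" "j+1 < k" for i j
  proof
    assume P: "P4 (sg!i) (sg!(i+1)) (sg!j) (sg!(j+1))"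
    have F: "col (psi i) = i" "psi i < n" "col (psi i + 1) = i+1" "psi i + 1 < n"
         "col (psi j) = j" "psi j < n" "col (psi j + 1) = j+1" "psi j + 1 < n"
      using psi_col[of i] psi_col1[of i] psi_col[of j] psi_col1[of j] ij by auto
    have "P4 (w!psi i) (w!(psi i+1)) (w!psi j) (w!(psi j+1)) = P4 (sg!i) (sg!(i+1)) (sg!j) (sg!(j+1))"
      by (rule P4_tr) (use F ij in auto)
    then show False using A1[of "psi i" "psi j"] psi_mono[OF ij(1)] F P by auto
  qed
  have G2: "\<not> (sg!(k - 1) < sg!i \<and> sg!i < sg!(i+1))" if i: "i+2 < k" for i
  proof
    assume P: "sg!(k - 1) < sg!i \<and> sg!i < sg!(i+1)"
    have F: "col (psi i) = i" "psi i < n" "col (psi i + 1) = i+1" "psi i + 1 < n"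
      using psi_col[of i] psi_col1[of i] i by auto
    have n1: "n - 1 < n" "col (n-1) = k - 1" using F col_last by auto
    have "psi i + 2 < n"
    proof (rule ccontr)
      assume "\<not> psi i + 2 < n"
      then have "n - 1 \<le> psi i + 1" by simp
      then have "col (n-1) \<le> col (psi i + 1)" by (rule col_mono)
      then show False using n1 F i by simp
    qed
    moreover have "w!(n-1) < w!(psi i) \<longleftrightarrow> sg!(k-1) < sg!i"
      by (rule cmpI) (use F n1 i in auto)
    moreover have "w!(psi i) < w!(psi i + 1) \<longleftrightarrow> sg!i < sg!(i+1)"
      by (rule cmpI) (use F n1 i in auto)
    ultimately show False using A2[of "psi i"] P by auto
  qed
  have G3: "\<not> (sg!0 < sg!(j+1) \<and> sg!(j+1) < sg!j)" if j: "1 \<le> j" "j+1 < k" for j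
  proof
    assume P: "sg!0 < sg!(j+1) \<and> sg!(j+1) < sg!j"
    have F: "col (psi j) = j" "psi j < n" "col (psi j + 1) = j+1" "psi j + 1 < n"
      using psi_col[of j] psi_col1[of j] j by auto
    have "psi j \<noteq> 0"
    proof
      assume "psi j = 0"
      then have "col (psi j) = 0" using col_0 by simp
      then show False using F j by simp
    qed
    moreover have "w!0 < w!(psi j + 1) \<longleftrightarrow> sg!0 < sg!(j+1)"
      by (rule cmpI) (use F col_0 j in auto)
    moreover have "w!(psi j + 1) < w!(psi j) \<longleftrightarrow> sg!(j+1) < sg!j"
      by (rule cmpI) (use F j in auto)
    ultimately show False using A3[of "psi j"] P F by auto
  qed
  show ?thesis unfolding av_def len_sg using G1 G2 G3 by blast
qed

lemma B_t: assumes "av w" shows "av t"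
proof -
  have A1: "\<And>i j. i+2 \<le> j \<Longrightarrow> j+1 < n \<Longrightarrow> \<not> P4 (w!i) (w!(i+1)) (w!j) (w!(j+1))"
   and A2: "\<And>i. i+2 < n \<Longrightarrow> \<not> (w!(n - 1) < w!i \<and> w!i < w!(i+1))"
   and A3: "\<And>j. 1 \<le> j \<Longrightarrow> j+1 < n \<Longrightarrow> \<not> (w!0 < w!(j+1) \<and> w!(j+1) < w!j)"
    using assms unfolding av_def len_w by blast+
  have tv: "\<And>i. i < m \<Longrightarrow> w!(p+i) = t!i \<and> 1 \<le> t!i \<and> t!i \<le> m"
    using blk_val by (metis add_diff_cancel_left' le_add1 nat_add_left_cancel_less)
  have G1: "\<not> P4 (t!i) (t!(i+1)) (t!j) (t!(j+1))" if ij: "i+2 \<le> j" "j+1 < m" for i j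
    using A1[of "p+i" "p+j"] tv[of i] tv[of "i+1"] tv[of j] tv[of "j+1"] ij n_eq
    by (simp add: add.assoc[symmetric])
  have G2: "\<not> (t!(m - 1) < t!i \<and> t!i < t!(i+1))" if i: "i+2 < m" for i
  proof
    assume P: "t!(m - 1) < t!i \<and> t!i < t!(i+1)"
    have tt: "w!(p+i) = t!i" "w!(p+i+1) = t!(i+1)" "w!(p+(m-1)) = t!(m-1)"
      using tv[of i] tv[of "i+1"] tv[of "m-1"] i by (auto simp: add.assoc)
    show False
    proof (cases "length v = 0")
      case True
      then have "n - 1 = p + (m-1)" using n_eq m_pos by simp
      then show False using A2[of "p+i"] tt P i True n_eq by auto
    next
      case False
      have "p+m < n" using False n_eq by simp
      then have "w!(p+m) \<ge> m+1" using w_out[of "p+m"] by auto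
      moreover have "t!(m-1) \<le> m" "t!(i+1) \<le> m" using tv[of "m-1"] tv[of "i+1"] i m_pos by simp_all
      ultimately have "P4 (w!(p+i)) (w!(p+i+1)) (w!(p+(m-1))) (w!(p+(m-1)+1))"
        using tt P m_pos unfolding P4_def by (simp add: add.assoc)
      moreover have "p + i + 2 \<le> p + (m-1)" "p + (m-1) + 1 < n" using i \<open>p+m < n\<close> m_pos by auto
      ultimately show False using A1[of "p+i" "p+(m-1)"] by blast
    qed
  qed
  have G3: "\<not> (t!0 < t!(j+1) \<and> t!(j+1) < t!j)" if j: "1 \<le> j" "j+1 < m" for j
  proof
    assume P: "t!0 < t!(j+1) \<and> t!(j+1) < t!j"
    have tt: "w!(p+0) = t!0" "w!(p+j+1) = t!(j+1)" "w!(p+j) = t!j"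
      using tv[of 0] tv[of "j+1"] tv[of "j"] j by (auto simp: add.assoc)
    show False
    proof (cases "p = 0")
      case True
      then show False using A3[of j] tt P j n_eq by auto
    next
      case False
      have "\<not> (p \<le> p - 1 \<and> p - 1 < p + m)" "p - 1 < n" using False n_eq by auto
      then have "w!(p-1) \<ge> m+1" using w_out[of "p-1"] by auto
      moreover have "t!j \<le> m" using tv[of j] j by simp
      ultimately have "P4 (w!(p-1)) (w!(p-1+1)) (w!(p+j)) (w!(p+j+1))"
        using tt P False unfolding P4_def by simp
      then show False using A1[of "p-1" "p+j"] j False n_eq by simp
    qed
  qed
  show ?thesis unfolding av_def len_t using G1 G2 G3 by blast
qed

end

context infl begin

abbreviation blk :: "nat \<Rightarrow> bool" where "blk y \<equiv> p \<le> y \<and> y < p + m"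

lemma out_big: "y < n \<Longrightarrow> \<not> blk y \<Longrightarrow> m + 1 \<le> w!y"
  using w_out[of y] by auto

lemma in_small: "blk y \<Longrightarrow> w!y \<le> m"
  using blk_val[of y] by auto

lemma A_w: assumes S: "av sg" and T: "av t" shows "av w"
proof -
  have S1: "\<And>i j. i+2 \<le> j \<Longrightarrow> j+1 < k \<Longrightarrow> \<not> P4 (sg!i) (sg!(i+1)) (sg!j) (sg!(j+1))"
   and S2: "\<And>i. i+2 < k \<Longrightarrow> \<not> (sg!(k - 1) < sg!i \<and> sg!i < sg!(i+1))"
   and S3: "\<And>j. 1 \<le> j \<Longrightarrow> j+1 < k \<Longrightarrow> \<not> (sg!0 < sg!(j+1) \<and> sg!(j+1) < sg!j)"
    using S unfolding av_def len_sg by blast+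
  have T1: "\<And>i j. i+2 \<le> j \<Longrightarrow> j+1 < m \<Longrightarrow> \<not> P4 (t!i) (t!(i+1)) (t!j) (t!(j+1))"
   and T2: "\<And>i. i+2 < m \<Longrightarrow> \<not> (t!(m - 1) < t!i \<and> t!i < t!(i+1))"
   and T3: "\<And>j. 1 \<le> j \<Longrightarrow> j+1 < m \<Longrightarrow> \<not> (t!0 < t!(j+1) \<and> t!(j+1) < t!j)"
    using T unfolding av_def len_t by blast+
  have tv: "\<And>y. blk y \<Longrightarrow> w!y = t!(y-p)" using blk_val by blast
  have G1: "\<not> P4 (w!i) (w!(i+1)) (w!j) (w!(j+1))" if ij: "i+2 \<le> j" "j+1 < n" for i j
  proof
    assume P: "P4 (w!i) (w!(i+1)) (w!j) (w!(j+1))"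
    consider (bb) "blk i \<and> blk (i+1)" "blk j \<and> blk (j+1)"
      | (bo) "blk i \<and> blk (i+1)" "\<not> (blk j \<and> blk (j+1))"
      | (ob) "\<not> (blk i \<and> blk (i+1))" "blk j \<and> blk (j+1)"
      | (oo) "\<not> (blk i \<and> blk (i+1))" "\<not> (blk j \<and> blk (j+1))" by blast
    then show False
    proof cases
      case bb
      have e: "w!i = t!(i-p)" "w!(i+1) = t!(i-p+1)" "w!j = t!(j-p)" "w!(j+1) = t!(j-p+1)"
        using tv bb by (simp_all add: Suc_diff_le)
      have "i-p+2 \<le> j-p" "j-p+1 < m" using bb ij by auto
      then show False using T1[of "i-p" "j-p"] P e by simp
    next
      case bo
      then have jj: "j + 1 \<ge> p + m" using ij by auto
      show False
      proof (cases "j = p + m - 1")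
        case True
        have "w!j = t!(m-1)" "w!(j+1) \<ge> m+1" using tv[of j] out_big[of "j+1"] True m_pos ij bo by auto
        moreover have "w!i = t!(i-p)" "w!(i+1) = t!(i-p+1)" using tv bo by (simp_all add: Suc_diff_le)
        moreover have "w!i \<le> m" "w!(i+1) \<le> m" "w!j \<le> m" using in_small bo True m_pos ij by auto
        moreover have "i - p + 2 < m" using bo ij True by auto
        ultimately show False using T2[of "i-p"] P unfolding P4_def by auto
      next
        case False
        then have "j \<ge> p + m" using jj by auto
        then have "w!j \<ge> m+1" "w!(j+1) \<ge> m+1" using out_big[of j] out_big[of "j+1"] ij by auto
        moreover have "w!i \<le> m" "w!(i+1) \<le> m" using in_small bo by auto
        ultimately show False using P unfolding P4_def by auto
      qed
    next
      case ob
      then have ii: "i < p" using ij by auto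
      show False
      proof (cases "i = p - 1")
        case True
        have "w!i \<ge> m+1" "w!(i+1) = t!0" using out_big[of i] tv[of "i+1"] True ii ij ob by auto
        moreover have "w!j = t!(j-p)" "w!(j+1) = t!(j-p+1)" using tv ob by (simp_all add: Suc_diff_le)
        moreover have "w!(i+1) \<le> m" "w!j \<le> m" "w!(j+1) \<le> m" using in_small ob True ii by auto
        moreover have "1 \<le> j - p" "j - p + 1 < m" using ob ij True ii by auto
        ultimately show False using T3[of "j-p"] P True unfolding P4_def by auto
      next
        case False
        then have "i + 1 < p" "i + 1 < n" using ii ij by auto
        then have "w!i \<ge> m+1" "w!(i+1) \<ge> m+1" using out_big[of i] out_big[of "i+1"] by auto
        moreover have "w!j \<le> m" "w!(j+1) \<le> m" using in_small ob by auto
        ultimately show False using P unfolding P4_def by auto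
      qed
    next
      case oo
      show False
      proof (cases "blk (i+1) \<and> blk j")
        case True
        then have "i = p - 1" "j = p + m - 1" "p \<ge> 1" using oo ij by auto
        then have "w!i \<ge> m+1" "w!(j+1) \<ge> m+1" "w!(i+1) \<le> m" "w!j \<le> m"
          using out_big[of i] out_big[of "j+1"] in_small[of "i+1"] in_small[of j] True ij m_pos by auto
        then show False using P unfolding P4_def by auto
      next
        case False
        have c1: "col (i+1) = col i + 1" "col (j+1) = col j + 1" using col_suc oo by auto
        have c2: "col (i+1) < col j" using col_strict[of "i+1" j] False ij by auto
        have c3: "col (j+1) < k" using col_lt ij by auto
        have "P4 (w!i) (w!(i+1)) (w!j) (w!(j+1)) = P4 (sg!col i) (sg!col (i+1)) (sg!col j) (sg!col (j+1))"
          by (rule P4_tr) (use ij c1 c2 in auto)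
        then show False using S1[of "col i" "col j"] P c1 c2 c3 by auto
      qed
    qed
  qed
  have G2: "\<not> (w!(n - 1) < w!i \<and> w!i < w!(i+1))" if i: "i+2 < n" for i
  proof
    assume P: "w!(n - 1) < w!i \<and> w!i < w!(i+1)"
    show False
    proof (cases "blk i \<and> blk (i+1)")
      case True
      show False
      proof (cases "blk (n-1)")
        case True
        then have "n - 1 = p + m - 1" using n_eq by auto
        then have "w!(n-1) = t!(m-1)" using tv[of "n-1"] True m_pos by auto
        moreover have "w!i = t!(i-p)" "w!(i+1) = t!(i-p+1)" using tv \<open>blk i \<and> blk (i+1)\<close> by (simp_all add: Suc_diff_le)
        moreover have "i - p + 2 < m" using \<open>blk i \<and> blk (i+1)\<close> i n_eq \<open>n - 1 = p + m - 1\<close> m_pos by auto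
        ultimately show False using T2[of "i-p"] P \<open>n - 1 = p + m - 1\<close> by auto
      next
        case False
        then show False using out_big[of "n-1"] in_small[of i] True P i by auto
      qed
    next
      case False
      show False
      proof (cases "blk (i+1) \<and> blk (n-1)")
        case True
        then have ip: "i = p - 1" "p \<ge> 1" using False by auto
        then have "\<not> blk i" "i < n" using i by auto
        then have "w!i \<ge> m+1" using out_big[of i] by auto
        then show False using in_small[of "i+1"] True P by auto
      next
        case False2: False
        have c1: "col (i+1) = col i + 1" using col_suc False by auto
        have c2: "col (i+1) < col (n-1)" using col_strict[of "i+1" "n-1"] False2 i by auto
        have "w!(n-1) < w!i \<longleftrightarrow> sg!(k-1) < sg!(col i)"
          using cmpI[of "n-1" i "k-1" "col i"] col_last i c1 c2 by auto
        moreover have "w!i < w!(i+1) \<longleftrightarrow> sg!(col i) < sg!(col i + 1)"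
          using cmpI[of i "i+1" "col i" "col i + 1"] i c1 by auto
        moreover have "col i + 2 < k" using c1 c2 col_last by arith
        ultimately show False using S2[of "col i"] P c1 by auto
      qed
    qed
  qed
  have G3: "\<not> (w!0 < w!(j+1) \<and> w!(j+1) < w!j)" if j: "1 \<le> j" "j+1 < n" for j
  proof
    assume P: "w!0 < w!(j+1) \<and> w!(j+1) < w!j"
    show False
    proof (cases "blk j \<and> blk (j+1)")
      case True
      show False
      proof (cases "p = 0")
        case True
        then have "w!0 = t!0" "w!j = t!j" "w!(j+1) = t!(j+1)" using tv \<open>blk j \<and> blk (j+1)\<close> m_pos by auto
        then show False using T3[of j] P j \<open>blk j \<and> blk (j+1)\<close> True by auto
      next
        case False
        then show False using out_big[of 0] in_small[of "j+1"] \<open>blk j \<and> blk (j+1)\<close> P j by auto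
      qed
    next
      case False
      show False
      proof (cases "blk 0 \<and> blk j")
        case True
        then have "j = p + m - 1" "p = 0" using False by auto
        then show False using out_big[of "j+1"] in_small[of j] True P j by auto
      next
        case False2: False
        have c1: "col (j+1) = col j + 1" using col_suc False by auto
        have c2: "col 0 < col j" using col_strict[of 0 j] False2 j by auto
        have c3: "col (j+1) < k" using col_lt j by auto
        have "w!0 < w!(j+1) \<longleftrightarrow> sg!0 < sg!(col j + 1)"
          using cmpI[of 0 "j+1" 0 "col j + 1"] col_0 j c1 c2 by auto
        moreover have "w!(j+1) < w!j \<longleftrightarrow> sg!(col j + 1) < sg!(col j)"
          using cmpI[of "j+1" j "col j + 1" "col j"] j c1 by auto
        ultimately show False using S3[of "col j"] P c1 c2 c3 col_0 by auto
      qed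
    qed
  qed
  show ?thesis unfolding av_def len_w using G1 G2 G3 by blast
qed

end

definition block :: "nat list \<Rightarrow> nat \<Rightarrow> bool" where
  "block w' m' \<longleftrightarrow> (\<exists>q. q + m' \<le> length w' \<and> (\<forall>y<length w'. w'!y \<le> m' \<longleftrightarrow> q \<le> y \<and> y < q + m'))"

context infl begin

lemma blk_char: "y < n \<Longrightarrow> (w!y \<le> m \<longleftrightarrow> blk y)"
  using out_big[of y] in_small[of y] by force

lemma block_m: "block w m"
  unfolding block_def len_w using blk_char n_eq by (intro exI[of _ p]) auto

lemma w_notblk: "y < n \<Longrightarrow> \<not> blk y \<Longrightarrow> w!y = sg!(col y) + m - 1 \<and> col y \<noteq> p \<and> col y < k"
  using w_out[of y] col_p[of y] col_lt[of y] by auto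

lemma no_bigger:
  assumes dist: "distinct sg" and st: "set sg = {1..k}"
    and bl: "block w m'" and mm: "m < m'" "m' < n"
  shows "\<exists>a b. intv sg a b"
proof -
  obtain q where q: "q + m' \<le> n" "\<And>y. y < n \<Longrightarrow> w!y \<le> m' \<longleftrightarrow> q \<le> y \<and> y < q + m'"
    using bl unfolding block_def len_w by blast
  have "w!p \<le> m'" using in_small[of p] m_pos mm by auto
  then have qp: "q \<le> p" using q(2)[of p] n_eq m_pos by auto
  have "p \<le> p+m-1" "p+m-1 < p+m" using m_pos by auto
  then have "w!(p+m-1) \<le> m'" using in_small[of "p+m-1"] mm by auto
  moreover have "p+m-1 < n" using n_eq m_pos by auto
  ultimately have "p + m - 1 < q + m'" using q(2)[of "p+m-1"] by auto
  then have qp2: "p + m \<le> q + m'" using m_pos by auto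
  define a where "a = q"
  define b where "b = q + m' - m"
  have bk: "b < k" using q(1) n_k m_pos mm unfolding b_def by auto
  have key: "sg!x \<le> m' - m + 1 \<longleftrightarrow> a \<le> x \<and> x \<le> b" if x: "x < k" for x
  proof (cases "x = p")
    case True
    then show ?thesis using sg_p qp qp2 unfolding a_def b_def by auto
  next
    case False
    have y: "col (psi x) = x" "psi x < n" using psi_col x by auto
    have nb: "\<not> blk (psi x)"
    proof
      assume "blk (psi x)"
      then have "col (psi x) = p" using col_p[OF y(2)] by blast
      then show False using y False by simp
    qed
    then have "w!(psi x) = sg!x + m - 1" using w_notblk y by auto
    then have "sg!x \<le> m' - m + 1 \<longleftrightarrow> q \<le> psi x \<and> psi x < q + m'"
      using q(2)[OF y(2)] mm m_pos sg_ge[OF x False] by auto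
    also have "\<dots> \<longleftrightarrow> a \<le> x \<and> x \<le> b"
      using False qp qp2 mm m_pos unfolding a_def b_def psi_def by auto
    finally show ?thesis .
  qed
  have img: "(\<lambda>i. sg!i) ` {a..b} = {1..<1+(b-a+1)}"
  proof
    show "(\<lambda>i. sg!i) ` {a..b} \<subseteq> {1..<1+(b-a+1)}"
    proof
      fix z assume "z \<in> (\<lambda>i. sg!i) ` {a..b}"
      then obtain x where x: "x \<in> {a..b}" "z = sg!x" by blast
      then have "x < k" using bk by auto
      then show "z \<in> {1..<1+(b-a+1)}" using key[of x] x sg_pos[of x] qp qp2 mm
        unfolding a_def b_def by auto
    qed
  next
    show "{1..<1+(b-a+1)} \<subseteq> (\<lambda>i. sg!i) ` {a..b}"
    proof
      fix z assume z: "z \<in> {1..<1+(b-a+1)}"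
      then have "z \<in> set sg" using st bk qp qp2 unfolding a_def b_def by auto
      then obtain x where x: "x < k" "sg!x = z" by (auto simp: in_set_conv_nth len_sg)
      then have "a \<le> x \<and> x \<le> b" using key[of x] z qp qp2 mm unfolding a_def b_def by auto
      then show "z \<in> (\<lambda>i. sg!i) ` {a..b}" using x by auto
    qed
  qed
  have "intv sg a b"
    unfolding intv_def len_sg using img bk mm n_k m_pos qp qp2 q(1) unfolding a_def b_def
    by (intro conjI exI[of _ 1]) auto
  then show ?thesis by blast
qed

lemma bigger:
  assumes dist: "distinct sg" and st: "set sg = {1..k}"
    and iv: "intv sg a b" and ap: "a \<le> p" "p \<le> b"
  shows "block w (m + (b - a + 1) - 1) \<and> m < m + (b - a + 1) - 1 \<and> m + (b - a + 1) - 1 < n"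
proof -
  define L where "L = b - a + 1"
  obtain c where ab: "a < b" "b < k" "L \<le> k - 1" and img: "(\<lambda>i. sg!i) ` {a..b} = {c..<c+L}"
    using iv unfolding intv_def len_sg L_def by blast
  have "1 \<in> (\<lambda>i. sg!i) ` {a..b}" using sg_p ap by force
  then have c1: "c \<le> 1" using img by auto
  have "c \<in> (\<lambda>i. sg!i) ` {a..b}" using img ab unfolding L_def by auto
  then obtain x0 where "x0 \<in> {a..b}" "c = sg!x0" by blast
  then have "c \<ge> 1" using sg_pos[of x0] ab by auto
  then have c: "c = 1" using c1 by simp
  have key: "sg!x \<le> L \<longleftrightarrow> a \<le> x \<and> x \<le> b" if x: "x < k" for x
  proof
    assume "sg!x \<le> L"
    then have "sg!x \<in> {c..<c+L}" using c sg_pos[OF x] by auto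
    then obtain x' where x': "x' \<in> {a..b}" "sg!x' = sg!x" using img by (metis imageE)
    then have "x' = x" using dist x ab by (auto simp: nth_eq_iff_index_eq len_sg)
    then show "a \<le> x \<and> x \<le> b" using x' by auto
  next
    assume "a \<le> x \<and> x \<le> b"
    then have "sg!x \<in> {c..<c+L}" using img by auto
    then show "sg!x \<le> L" using c by auto
  qed
  have bl: "block w (m + L - 1)"
    unfolding block_def len_w
  proof (intro exI[of _ a] conjI allI impI)
    show "a + (m + L - 1) \<le> n" using ab n_k m_pos unfolding L_def by auto
  next
    fix y assume y: "y < n"
    show "w!y \<le> m + L - 1 \<longleftrightarrow> a \<le> y \<and> y < a + (m + L - 1)"
    proof (cases "blk y")
      case True
      then show ?thesis using in_small[of y] ap ab unfolding L_def by auto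
    next
      case False
      have W: "w!y = sg!(col y) + m - 1" "col y \<noteq> p" "col y < k" using w_notblk y False by auto
      have "w!y \<le> m + L - 1 \<longleftrightarrow> sg!(col y) \<le> L" using W sg_ge[of "col y"] m_pos by auto
      also have "\<dots> \<longleftrightarrow> a \<le> col y \<and> col y \<le> b" using key W by auto
      also have "\<dots> \<longleftrightarrow> a \<le> y \<and> y < a + (m + L - 1)"
        using False ap ab m_pos unfolding col_def L_def by auto
      finally show ?thesis .
    qed
  qed
  show ?thesis using bl ab n_k m_pos unfolding L_def by auto
qed

end

lemma ivt_nat: "P (x::nat) \<Longrightarrow> \<not> P y \<Longrightarrow> x \<le> y \<Longrightarrow> \<exists>i. x \<le> i \<and> i < y \<and> P i \<and> \<not> P (i+1)"
proof (induction y)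
  case 0
  then show ?case by auto
next
  case (Suc y)
  show ?case
  proof (cases "P y")
    case True
    then have "x \<le> y" using Suc.prems by (cases "x = Suc y") auto
    then show ?thesis using True Suc.prems by (intro exI[of _ y]) auto
  next
    case False
    have "x \<le> y"
    proof (rule ccontr)
      assume "\<not> x \<le> y"
      then have "x = Suc y" using Suc.prems(3) by simp
      then show False using Suc.prems by simp
    qed
    then show ?thesis using Suc.IH[OF Suc.prems(1) False] by auto
  qed
qed

lemma inc_aux: "(\<And>i::nat. a \<le> i \<Longrightarrow> i < e \<Longrightarrow> f i < (f (i+1)::nat)) \<Longrightarrow> a \<le> x \<Longrightarrow> x \<le> e \<Longrightarrow> f a \<le> f x"
proof (induction x)
  case 0
  then show ?case by auto
next
  case (Suc x)
  show ?case
  proof (cases "a = Suc x")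
    case True then show ?thesis by simp
  next
    case False
    then have "a \<le> x" "x < e" using Suc.prems by auto
    then have "f a \<le> f x" "f x < f (x+1)" using Suc.IH Suc.prems(1) by auto
    then show ?thesis by simp
  qed
qed

lemma dec_aux: "(\<And>i::nat. i < e \<Longrightarrow> f (i+1) < (f i::nat)) \<Longrightarrow> x \<le> e \<Longrightarrow> f e \<le> f x"
proof (induction e arbitrary: x)
  case 0
  then show ?case by auto
next
  case (Suc e)
  show ?case
  proof (cases "x = Suc e")
    case True then show ?thesis by simp
  next
    case False
    then have "x \<le> e" using Suc.prems by auto
    then have "f e \<le> f x" using Suc.IH[of x] Suc.prems by auto
    moreover have "f (Suc e) < f e" using Suc.prems(1)[of e] by auto
    ultimately show ?thesis by simp
  qed
qed

lemma contig_intv: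
  assumes dist: "distinct s" and st: "set s = {1..k}" and len: "length s = k"
    and d: "2 \<le> d" "d \<le> k - 1"
    and cont: "\<And>x y z. x < y \<Longrightarrow> y < z \<Longrightarrow> z < k \<Longrightarrow> s!x \<le> d \<Longrightarrow> s!z \<le> d \<Longrightarrow> s!y \<le> d"
  shows "\<exists>a b. intv s a b \<and> (\<exists>x\<in>{a..b}. s!x = 1)"
proof -
  define X where "X = {x. x < k \<and> s!x \<le> d}"
  have fin: "finite X" unfolding X_def by auto
  have "1 \<in> set s" using st d by auto
  then obtain x1 where x1: "x1 < k" "s!x1 = 1" using len by (auto simp: in_set_conv_nth)
  then have x1X: "x1 \<in> X" using d unfolding X_def by auto
  then have ne: "X \<noteq> {}" by auto
  define a where "a = Min X"
  define b where "b = Max X"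
  have aX: "a \<in> X" and bX: "b \<in> X" using fin ne unfolding a_def b_def by auto
  have Xab: "X = {a..b}"
  proof
    show "X \<subseteq> {a..b}" using fin unfolding a_def b_def by auto
  next
    show "{a..b} \<subseteq> X"
    proof
      fix y assume y: "y \<in> {a..b}"
      show "y \<in> X"
      proof (cases "y = a \<or> y = b")
        case True then show ?thesis using aX bX by auto
      next
        case False
        then have "a < y" "y < b" using y by auto
        moreover have "b < k" "s!a \<le> d" "s!b \<le> d" using aX bX unfolding X_def by auto
        ultimately show ?thesis using cont[of a y b] unfolding X_def by auto
      qed
    qed
  qed
  have bk: "b < k" using bX unfolding X_def by auto
  have img: "(\<lambda>i. s!i) ` X = {1..d}"
  proof
    show "(\<lambda>i. s!i) ` X \<subseteq> {1..d}"
    proof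
      fix z assume "z \<in> (\<lambda>i. s!i) ` X"
      then obtain x where "x \<in> X" "z = s!x" by blast
      moreover then have "s!x \<in> set s" using len unfolding X_def by auto
      ultimately show "z \<in> {1..d}" using st unfolding X_def by auto
    qed
  next
    show "{1..d} \<subseteq> (\<lambda>i. s!i) ` X"
    proof
      fix z assume z: "z \<in> {1..d}"
      then have "z \<in> set s" using st d by auto
      then obtain x where "x < k" "s!x = z" using len by (auto simp: in_set_conv_nth)
      then show "z \<in> (\<lambda>i. s!i) ` X" using z unfolding X_def by force
    qed
  qed
  have inj: "inj_on (\<lambda>i. s!i) X" using dist len unfolding X_def by (auto intro!: inj_on_nth)
  have "card X = d" using card_image[OF inj] img by simp
  then have cab: "b + 1 - a = d" using Xab by simp
  have ab: "a < b" using cab d by auto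
  have "intv s a b"
    unfolding intv_def len
    using ab bk cab d img Xab by (intro conjI exI[of _ 1]) auto
  moreover have "x1 \<in> {a..b}" using x1X Xab by simp
  ultimately show ?thesis using x1 by blast
qed


lemma key_simple:
  assumes dist: "distinct s" and st: "set s = {1..k}" and len: "length s = k" and avs: "av s"
    and iso: "\<not> (\<exists>a b. intv s a b \<and> (\<exists>x\<in>{a..b}. s!x = 1))"
  shows "\<not> (\<exists>a b. intv s a b)"
proof
  assume "\<exists>a b. intv s a b"
  then obtain p q where iv: "intv s p q" by blast
  then obtain c where pq: "p < q" "q < k" "q - p + 1 \<le> k - 1"
    and img: "(\<lambda>i. s!i) ` {p..q} = {c..<c+(q-p+1)}"
    unfolding intv_def len by blast
  define d where "d = c + (q - p)"
  have S1: "\<And>i j. i+2 \<le> j \<Longrightarrow> j+1 < k \<Longrightarrow> \<not> P4 (s!i) (s!(i+1)) (s!j) (s!(j+1))"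
   and S2: "\<And>i. i+2 < k \<Longrightarrow> \<not> (s!(k - 1) < s!i \<and> s!i < s!(i+1))"
   and S3: "\<And>j. 1 \<le> j \<Longrightarrow> j+1 < k \<Longrightarrow> \<not> (s!0 < s!(j+1) \<and> s!(j+1) < s!j)"
    using avs unfolding av_def len by blast+
  have val: "\<And>x. x < k \<Longrightarrow> 1 \<le> s!x \<and> s!x \<le> k"
  proof -
    fix x assume "x < k"
    then have "s!x \<in> set s" using len by auto
    then show "1 \<le> s!x \<and> s!x \<le> k" using st by auto
  qed
  have inj: "\<And>x y. x < k \<Longrightarrow> y < k \<Longrightarrow> s!x = s!y \<Longrightarrow> x = y"
    using dist len by (auto simp: nth_eq_iff_index_eq)
  have Mchar: "c \<le> s!x \<and> s!x \<le> d \<longleftrightarrow> p \<le> x \<and> x \<le> q" if x: "x < k" for x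
  proof
    assume "c \<le> s!x \<and> s!x \<le> d"
    then have "s!x \<in> {c..<c+(q-p+1)}" unfolding d_def by auto
    then obtain x' where "x' \<in> {p..q}" "s!x' = s!x" using img by (metis imageE)
    then show "p \<le> x \<and> x \<le> q" using inj[of x' x] x pq by auto
  next
    assume "p \<le> x \<and> x \<le> q"
    then have "s!x \<in> {c..<c+(q-p+1)}" using img by auto
    then show "c \<le> s!x \<and> s!x \<le> d" unfolding d_def by auto
  qed
  have inM: "\<And>x. p \<le> x \<Longrightarrow> x \<le> q \<Longrightarrow> c \<le> s!x \<and> s!x \<le> d" using Mchar pq by auto
  have outM: "\<And>x. x < k \<Longrightarrow> \<not> (p \<le> x \<and> x \<le> q) \<Longrightarrow> s!x < c \<or> d < s!x" using Mchar by force
  have c2: "2 \<le> c"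
  proof -
    have "c \<in> (\<lambda>i. s!i) ` {p..q}" using img by auto
    then obtain x0 where x0: "x0 \<in> {p..q}" "c = s!x0" by blast
    then have "c \<ge> 1" using val[of x0] pq by auto
    moreover have "c \<noteq> 1" using iso iv x0 by auto
    ultimately show ?thesis by simp
  qed
  have dk: "d \<le> k"
  proof -
    have "d \<in> (\<lambda>i. s!i) ` {p..q}" using img unfolding d_def by auto
    then obtain x0 where "x0 \<in> {p..q}" "d = s!x0" by blast
    then show ?thesis using val[of x0] pq by auto
  qed
  have cd: "c < d" using pq unfolding d_def by auto
  have L1: "\<And>x. x < k \<Longrightarrow> s!x \<le> d \<Longrightarrow> \<not> (p \<le> x \<and> x \<le> q) \<Longrightarrow> s!x < c" using outM by force
  have isoI: "\<And>d'. 2 \<le> d' \<Longrightarrow> d' \<le> k - 1 \<Longrightarrow>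
      (\<And>x y z. x < y \<Longrightarrow> y < z \<Longrightarrow> z < k \<Longrightarrow> s!x \<le> d' \<Longrightarrow> s!z \<le> d' \<Longrightarrow> s!y \<le> d') \<Longrightarrow> False"
    using contig_intv[OF dist st len] iso by blast
  have pp1: "p + 1 \<le> q" using pq by simp
  have sp: "c \<le> s!p" "s!p \<le> d" "c \<le> s!(p+1)" "s!(p+1) \<le> d" using inM pp1 by auto
  have "s!p \<noteq> s!(p+1)" using inj[of p "p+1"] pq by auto
  then consider (asc) "s!p < s!(p+1)" | (desc) "s!(p+1) < s!p" by linarith
  then show False
  proof cases
    case asc
    have noLH: "\<not> (s!i < c \<and> d < s!(i+1))" if i: "i + 1 < k" for i
    proof
      assume h: "s!i < c \<and> d < s!(i+1)"
      then have o: "\<not> (p \<le> i \<and> i \<le> q)" "\<not> (p \<le> i+1 \<and> i+1 \<le> q)" using inM by (auto dest: inM)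
      then consider "i + 1 < p" | "q < i" using pq by arith
      then show False
      proof cases
        case 1
        have "P4 (s!i) (s!(i+1)) (s!p) (s!(p+1))" unfolding P4_def using h sp asc by auto
        then show False using S1[of i p] 1 pq by auto
      next
        case 2
        have "P4 (s!p) (s!(p+1)) (s!i) (s!(i+1))" unfolding P4_def using h sp asc by auto
        then show False using S1[of p i] 2 pq i by auto
      qed
    qed
    have noEnd: "\<not> s!(k-1) < c" if qk: "q < k - 1"
    proof
      assume "s!(k-1) < c"
      then show False using S2[of p] qk pq sp asc by auto
    qed
    have cont: "s!y \<le> d" if xyz: "x < y" "y < z" "z < k" "s!x \<le> d" "s!z \<le> d" for x y z
    proof (rule ccontr)
      assume yH: "\<not> s!y \<le> d"
      have yk: "y < k" using xyz by simp
      consider "y < p" | "q < y" using inM[of y] yH by linarith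
      then show False
      proof cases
        case 1
        obtain i where i: "x \<le> i" "i < y" "s!i \<le> d" "\<not> s!(i+1) \<le> d"
          using ivt_nat[of "\<lambda>j. s!j \<le> d" x y] xyz yH by auto
        have "s!i < c" using L1[of i] i 1 yk by auto
        then show False using noLH[of i] i yk by auto
      next
        case 2
        show False
        proof (cases "s!(k-1) \<le> d")
          case True
          have qk1: "q < k - 1" "k - 1 < k" using 2 xyz by auto
          then have "s!(k-1) < c" using L1[of "k-1"] True by auto
          then show False using noEnd qk1 by auto
        next
          case False
          have "z \<le> k - 1" using xyz by simp
          then obtain i where i: "z \<le> i" "i < k-1" "s!i \<le> d" "\<not> s!(i+1) \<le> d"
            using ivt_nat[of "\<lambda>j. s!j \<le> d" z "k-1"] xyz False by blast
          have "s!i < c" using L1[of i] i 2 xyz by auto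
          moreover have "i + 1 < k" using i by arith
          ultimately show False using noLH[of i] i by auto
        qed
      qed
    qed
    show False
    proof (cases "d \<le> k - 1")
      case True
      then show False using isoI[of d] cont c2 cd by auto
    next
      case False
      then have dk': "d = k" using dk by simp
      have qk: "q = k - 1"
      proof (rule ccontr)
        assume "q \<noteq> k - 1"
        then have "q < k - 1" using pq by simp
        moreover have "s!(k-1) < c" using L1[of "k-1"] val[of "k-1"] dk' pq calculation by auto
        ultimately show False using noEnd by auto
      qed
      have Lc: "s!x < c \<longleftrightarrow> x < p" if x: "x < k" for x
      proof (cases "x < p")
        case True
        then show ?thesis using L1[of x] val[of x] dk' x by auto
      next
        case False
        then have "p \<le> x" "x \<le> q" using x qk by auto
        then show ?thesis using inM[of x] False by auto
      qed
      show False
      proof (cases "3 \<le> c")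
        case True
        have ct: "\<And>x y z. x < y \<Longrightarrow> y < z \<Longrightarrow> z < k \<Longrightarrow> s!x \<le> c - 1 \<Longrightarrow> s!z \<le> c - 1 \<Longrightarrow> s!y \<le> c - 1"
        proof -
          fix x y z assume h: "x < y" "y < z" "z < k" "s!x \<le> c - 1" "s!z \<le> c - 1"
          have "s!z < c" using h(5) c2 by arith
          then have "z < p" using Lc[of z] h by simp
          then have "y < p" using h by simp
          then have "s!y < c" using Lc[of y] h by simp
          then show "s!y \<le> c - 1" by arith
        qed
        have h: "2 \<le> c - 1" "c - 1 \<le> k - 1" using True cd dk' by arith+
        show False using isoI[OF h ct] .
      next
        case False
        then have c2': "c = 2" using c2 by simp
        have "1 \<in> set s" using st pq by auto
        then obtain x1 where x1: "x1 < k" "s!x1 = 1" using len by (auto simp: in_set_conv_nth)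
        then have "x1 < p" using Lc[of x1] c2' by simp
        have p1: "p = 1"
        proof (rule ccontr)
          assume "p \<noteq> 1"
          then have "p \<ge> 2" using \<open>x1 < p\<close> by simp
          then have "s!0 < 2" "s!1 < 2" using Lc c2' pq by auto
          then have "s!0 = s!1" using val[of 0] val[of 1] pq by auto
          then show False using inj[of 0 1] pq by auto
        qed
        have s0: "s!0 = 1" using x1 \<open>x1 < p\<close> p1 by auto
        have incr: "s!j < s!(j+1)" if j: "1 \<le> j" "j < k - 1" for j
        proof -
          have jk: "j + 1 < k" using j by arith
          have "s!(j+1) \<noteq> 1"
          proof
            assume "s!(j+1) = 1"
            then have "s!(j+1) = s!0" using s0 by simp
            then have "j + 1 = 0" using inj[of "j+1" 0] jk by simp
            then show False by simp
          qed
          then have "s!0 < s!(j+1)" using s0 val[of "j+1"] jk by simp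
          moreover have "s!j \<noteq> s!(j+1)" using inj[of j "j+1"] jk by auto
          ultimately show ?thesis using S3[of j] j jk by auto
        qed
        have "2 \<in> set s" using st pq qk p1 by auto
        then obtain x2 where x2: "x2 < k" "s!x2 = 2" using len by (auto simp: in_set_conv_nth)
        have "x2 \<noteq> 0"
        proof
          assume "x2 = 0"
          then show False using x2 s0 by simp
        qed
        then have "s!1 \<le> s!x2" using inc_aux[of 1 "k-1" "\<lambda>i. s!i" x2] incr x2 by auto
        moreover have "s!1 \<noteq> 1" using inj[of 0 1] s0 pq p1 by auto
        ultimately have s1: "s!1 = 2" using val[of 1] x2 pq p1 by auto
        have "\<And>x y z. x < y \<Longrightarrow> y < z \<Longrightarrow> z < k \<Longrightarrow> s!x \<le> 2 \<Longrightarrow> s!z \<le> 2 \<Longrightarrow> s!y \<le> 2"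
        proof -
          fix x y z assume h: "x < y" "y < z" "z < k" "s!x \<le> 2" "s!z \<le> 2"
          have "z \<le> 1"
          proof (rule ccontr)
            assume "\<not> z \<le> 1"
            then have "s!z \<noteq> 1" "s!z \<noteq> 2" using inj[of z 0] inj[of z 1] s0 s1 h pq p1 by auto
            then show False using val[of z] h by auto
          qed
          then show "s!y \<le> 2" using h by auto
        qed
        then show False using isoI[of 2] pq qk p1 by auto
      qed
    qed
  next
    case desc
    have noHL: "\<not> (d < s!i \<and> s!(i+1) < c)" if i: "i + 1 < k" for i
    proof
      assume h: "d < s!i \<and> s!(i+1) < c"
      then have o: "\<not> (p \<le> i \<and> i \<le> q)" "\<not> (p \<le> i+1 \<and> i+1 \<le> q)" using inM by (auto dest: inM)
      then consider "i + 1 < p" | "q < i" using pq by arith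
      then show False
      proof cases
        case 1
        have "P4 (s!i) (s!(i+1)) (s!p) (s!(p+1))" unfolding P4_def using h sp desc by auto
        then show False using S1[of i p] 1 pq by auto
      next
        case 2
        have "P4 (s!p) (s!(p+1)) (s!i) (s!(i+1))" unfolding P4_def using h sp desc by auto
        then show False using S1[of p i] 2 pq i by auto
      qed
    qed
    have noStart: "\<not> s!0 < c" if p0: "0 < p"
    proof
      assume "s!0 < c"
      then show False using S3[of p] p0 pq sp desc by auto
    qed
    have cont: "s!y \<le> d" if xyz: "x < y" "y < z" "z < k" "s!x \<le> d" "s!z \<le> d" for x y z
    proof (rule ccontr)
      assume yH: "\<not> s!y \<le> d"
      have yk: "y < k" using xyz by simp
      consider "y < p" | "q < y" using inM[of y] yH by linarith
      then show False
      proof cases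
        case 2
        obtain i where i: "y \<le> i" "i < z" "\<not> s!i \<le> d" "s!(i+1) \<le> d"
          using ivt_nat[of "\<lambda>j. \<not> s!j \<le> d" y z] xyz yH by auto
        have "s!(i+1) < c" using L1[of "i+1"] i 2 xyz by auto
        then show False using noHL[of i] i xyz by auto
      next
        case 1
        show False
        proof (cases "s!0 \<le> d")
          case True
          have "s!0 < c" using L1[of 0] True 1 xyz by auto
          then show False using noStart 1 xyz by auto
        next
          case False
          obtain i where i: "0 \<le> i" "i < x" "\<not> s!i \<le> d" "s!(i+1) \<le> d"
            using ivt_nat[of "\<lambda>j. \<not> s!j \<le> d" 0 x] xyz False by auto
          have "s!(i+1) < c" using L1[of "i+1"] i 1 xyz by auto
          then show False using noHL[of i] i xyz by auto
        qed
      qed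
    qed
    show False
    proof (cases "d \<le> k - 1")
      case True
      then show False using isoI[of d] cont c2 cd by auto
    next
      case False
      then have dk': "d = k" using dk by simp
      have p0: "p = 0"
      proof (rule ccontr)
        assume "p \<noteq> 0"
        moreover have "s!0 < c" using L1[of 0] val[of 0] dk' pq calculation by auto
        ultimately show False using noStart by auto
      qed
      have Lc: "s!x < c \<longleftrightarrow> q < x" if x: "x < k" for x
      proof (cases "q < x")
        case True
        then show ?thesis using L1[of x] val[of x] dk' x by auto
      next
        case False
        then have "p \<le> x" "x \<le> q" using x p0 by auto
        then show ?thesis using inM[of x] False by auto
      qed
      show False
      proof (cases "3 \<le> c")
        case True
        have ct: "\<And>x y z. x < y \<Longrightarrow> y < z \<Longrightarrow> z < k \<Longrightarrow> s!x \<le> c - 1 \<Longrightarrow> s!z \<le> c - 1 \<Longrightarrow> s!y \<le> c - 1"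
        proof -
          fix x y z assume h: "x < y" "y < z" "z < k" "s!x \<le> c - 1" "s!z \<le> c - 1"
          have "q < x" using Lc[of x] h c2 by auto
          then have "q < y" using h by simp
          then show "s!y \<le> c - 1" using Lc[of y] h by auto
        qed
        have h: "2 \<le> c - 1" "c - 1 \<le> k - 1" using True cd dk' by arith+
        show False using isoI[OF h ct] .
      next
        case False
        then have c2': "c = 2" using c2 by simp
        have "1 \<in> set s" using st pq by auto
        then obtain x1 where x1: "x1 < k" "s!x1 = 1" using len by (auto simp: in_set_conv_nth)
        then have "q < x1" using Lc[of x1] c2' by simp
        have qk: "q = k - 2"
        proof (rule ccontr)
          assume "q \<noteq> k - 2"
          then have "q + 2 < k" using \<open>q < x1\<close> x1 by simp
          then have "s!(q+1) < 2" "s!(q+2) < 2" using Lc c2' by auto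
          then have "s!(q+1) = s!(q+2)" using val[of "q+1"] val[of "q+2"] \<open>q + 2 < k\<close> by auto
          then show False using inj[of "q+1" "q+2"] \<open>q + 2 < k\<close> by auto
        qed
        have "x1 = k - 1" using x1 \<open>q < x1\<close> qk by arith
        then have sk: "s!(k-1) = 1" using x1 by simp
        have decr: "s!(i+1) < s!i" if i: "i < k - 2" for i
        proof -
          have ik: "i + 2 < k" "i < k" "i \<noteq> k - 1" using i by arith+
          have "s!i \<noteq> 1"
          proof
            assume "s!i = 1"
            then have "s!i = s!(k-1)" using sk by simp
            then have "i = k - 1" using inj[of i "k-1"] ik by simp
            then show False using ik by simp
          qed
          then have "s!(k-1) < s!i" using sk val[of i] ik by simp
          moreover have "s!i \<noteq> s!(i+1)" using inj[of i "i+1"] ik by auto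
          ultimately show ?thesis using S2[of i] ik by auto
        qed
        have "2 \<in> set s" using st pq qk by auto
        then obtain x2 where x2: "x2 < k" "s!x2 = 2" using len by (auto simp: in_set_conv_nth)
        have "x2 \<noteq> k - 1" using x2 sk by auto
        then have "s!(k-2) \<le> s!x2" using dec_aux[of "k-2" "\<lambda>i. s!i" x2] decr x2 by auto
        moreover have "s!(k-2) \<noteq> 1" using inj[of "k-2" "k-1"] sk pq qk by auto
        ultimately have s1: "s!(k-2) = 2" using val[of "k-2"] x2 pq qk by auto
        have "\<And>x y z. x < y \<Longrightarrow> y < z \<Longrightarrow> z < k \<Longrightarrow> s!x \<le> 2 \<Longrightarrow> s!z \<le> 2 \<Longrightarrow> s!y \<le> 2"
        proof -
          fix x y z assume h: "x < y" "y < z" "z < k" "s!x \<le> 2" "s!z \<le> 2"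
          have "k - 2 \<le> x"
          proof (rule ccontr)
            assume "\<not> k - 2 \<le> x"
            then have "s!x \<noteq> 1" "s!x \<noteq> 2" using inj[of x "k-1"] inj[of x "k-2"] sk s1 h pq qk by auto
            then show False using val[of x] h by auto
          qed
          then show "s!y \<le> 2" using h by auto
        qed
        moreover have "(2::nat) \<le> 2" "2 \<le> k - 1" using pq qk p0 by arith+
        ultimately show False using isoI[of 2] by blast
      qed
    qed
  qed
qed


lemma insert1_iv: "1 \<le> k \<Longrightarrow> insert 1 {2..k} = {1..k::nat}" by auto

lemma minus1_iv: "{1..k} - {1::nat} = {2..k}" by auto

context infl begin

lemma sh_inj: "inj sh" unfolding sh_def inj_def using m_pos by auto

lemma set_uv: "set u \<union> set v \<subseteq> {2..}" using u_ge v_ge by auto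

lemma sh_big: "x \<in> set u \<union> set v \<Longrightarrow> m + 1 \<le> sh x" using u_ge v_ge m_pos unfolding sh_def by force

lemma w_perm:
  assumes "distinct sg" "set sg = {1..k}" "distinct t" "set t = {1..m}"
  shows "distinct w \<and> set w = {1..n}"
proof
  have duv: "distinct (u @ v)" "1 \<notin> set u" "1 \<notin> set v" using assms(1) unfolding sg_def by auto
  have "set u \<union> set v = set sg - {1}" using duv unfolding sg_def by auto
  also have "\<dots> = {2..k}" using assms(2) by (simp only: minus1_iv)
  finally have suv: "set u \<union> set v = {2..k}" .
  have "inj_on sh (set (u @ v))" using sh_inj inj_on_subset by blast
  then have "distinct (map sh (u @ v))" using duv(1) distinct_map by blast
  then have d1: "distinct (map sh u @ map sh v)" by simp
  have disj: "set t \<inter> (sh ` set u \<union> sh ` set v) = {}"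
  proof -
    have "\<And>x. x \<in> set u \<union> set v \<Longrightarrow> sh x \<notin> set t" using assms(4) sh_big by force
    then show ?thesis by blast
  qed
  show "distinct w" unfolding w_def using d1 disj assms(3) by auto
  have "sh ` {2..k} = {m+1..n}"
  proof
    show "sh ` {2..k} \<subseteq> {m+1..n}" using m_pos n_k unfolding sh_def by auto
  next
    show "{m+1..n} \<subseteq> sh ` {2..k}"
    proof
      fix z assume z: "z \<in> {m+1..n}"
      then have "z = sh (z + 1 - m)" "z + 1 - m \<in> {2..k}" using m_pos n_k unfolding sh_def by auto
      then show "z \<in> sh ` {2..k}" by blast
    qed
  qed
  then have "set (map sh u) \<union> set (map sh v) = {m+1..n}" using suv by (simp only: set_map image_Un[symmetric])
  moreover have "set w = set t \<union> (set (map sh u) \<union> set (map sh v))" unfolding w_def by auto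
  moreover have "m \<le> n" using n_k k_eq by simp
  ultimately show "set w = {1..n}" using assms(4) by auto
qed

lemma perm_of_w:
  assumes "distinct w" "set w = {1..n}"
  shows "distinct sg \<and> set sg = {1..k} \<and> distinct t \<and> set t = {1..m}"
proof -
  have dt: "distinct t" "distinct (map sh u @ map sh v)" using assms(1) unfolding w_def by auto
  then have "distinct (map sh (u @ v))" by simp
  then have duv: "distinct (u @ v)" by (simp only: distinct_map)
  have n1: "1 \<notin> set u" "1 \<notin> set v" using u_ge v_ge by auto
  have st: "set t = {1..m}"
  proof
    show "set t \<subseteq> {1..m}" using t_rng m_def by auto
  next
    show "{1..m} \<subseteq> set t"
    proof
      fix z assume z: "z \<in> {1..m}"
      then have "z \<in> set w" using assms(2) n_k m_pos k_eq by auto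
      moreover have "z \<notin> sh ` (set u \<union> set v)"
      proof
        assume "z \<in> sh ` (set u \<union> set v)"
        then obtain x where "x \<in> set u \<union> set v" "z = sh x" by blast
        then show False using sh_big[of x] z by simp
      qed
      ultimately show "z \<in> set t" unfolding w_def by auto
    qed
  qed
  have "sh ` (set u \<union> set v) = {m+1..n}"
  proof
    show "sh ` (set u \<union> set v) \<subseteq> {m+1..n}"
    proof
      fix z assume "z \<in> sh ` (set u \<union> set v)"
      then have "z \<in> set w" "m + 1 \<le> z" using sh_big unfolding w_def by auto
      then show "z \<in> {m+1..n}" using assms(2) by auto
    qed
  next
    show "{m+1..n} \<subseteq> sh ` (set u \<union> set v)"
    proof
      fix z assume z: "z \<in> {m+1..n}"
      then have "z \<in> set w" using assms(2) by auto
      moreover have "z \<notin> set t" using st z by auto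
      ultimately show "z \<in> sh ` (set u \<union> set v)" unfolding w_def by auto
    qed
  qed
  then have "set u \<union> set v = {2..k}"
  proof -
    assume h: "sh ` (set u \<union> set v) = {m+1..n}"
    show ?thesis
    proof
      show "set u \<union> set v \<subseteq> {2..k}"
      proof
        fix x assume x: "x \<in> set u \<union> set v"
        then have "sh x \<in> {m+1..n}" using h by auto
        then show "x \<in> {2..k}" using x u_ge v_ge m_pos n_k unfolding sh_def by auto
      qed
    next
      show "{2..k} \<subseteq> set u \<union> set v"
      proof
        fix x assume x: "x \<in> {2..k}"
        then have "sh x \<in> {m+1..n}" using m_pos n_k unfolding sh_def by auto
        then obtain y where "y \<in> set u \<union> set v" "sh x = sh y" using h by (metis imageE)
        then show "x \<in> set u \<union> set v" using sh_inj by (metis injD)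
      qed
    qed
  qed
  moreover have "set sg = insert 1 (set u \<union> set v)" unfolding sg_def by auto
  ultimately have "set sg = {1..k}" using insert1_iv[of k] k_eq by simp
  moreover have "distinct sg" unfolding sg_def using duv n1 by auto
  ultimately show ?thesis using dt st by auto
qed

end


definition F :: "nat list \<times> nat list \<Rightarrow> nat list" where
  "F st = (let s = fst st; t = snd st; u = takeWhile (\<lambda>x. x \<noteq> 1) s; v = tl (dropWhile (\<lambda>x. x \<noteq> 1) s)
     in map (\<lambda>x. x + length t - 1) u @ t @ map (\<lambda>x. x + length t - 1) v)"

definition Sset :: "nat \<Rightarrow> nat list set" where
  "Sset k = {w \<in> A_set k. is_simple w}"

lemma perm_iff: "w \<in> permutations_of_set {1..n} \<longleftrightarrow> distinct w \<and> set w = {1..n}"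
  unfolding permutations_of_set_def by auto

lemma perm_len: "distinct w \<Longrightarrow> set w = {1..n} \<Longrightarrow> length w = n"
  using distinct_card[of w] by simp

lemma tw_split: assumes "(1::nat) \<notin> set u"
  shows "takeWhile (\<lambda>x. x \<noteq> 1) (u @ 1 # v) = u \<and> tl (dropWhile (\<lambda>x. x \<noteq> (1::nat)) (u @ 1 # v)) = v"
proof -
  have h: "\<And>x. x \<in> set u \<Longrightarrow> x \<noteq> 1" using assms by auto
  show ?thesis using takeWhile_append2[of u "\<lambda>x. x \<noteq> 1", OF h] dropWhile_append2[of u "\<lambda>x. x \<noteq> 1", OF h]
    by simp
qed

lemma F_infl: assumes "infl u v t" shows "F (infl.sg u v, t) = infl.w u v t"
proof -
  interpret infl u v t by fact
  have "1 \<notin> set u" using u_ge by auto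
  then show ?thesis using tw_split[of u v]
    unfolding F_def sg_def w_def sh_def m_def by simp
qed

lemma perm_split:
  fixes s :: "nat list"
  assumes d: "distinct s" and st: "set s = {1..k}" and k: "1 \<le> k"
  shows "\<exists>u v. s = u @ 1 # v \<and> (\<forall>x\<in>set u. 2 \<le> x) \<and> (\<forall>x\<in>set v. 2 \<le> x)"
proof -
  have "1 \<in> set s" using st k by auto
  then obtain u v where uv: "s = u @ 1 # v" using in_set_conv_decomp by metis
  have s1: "set u \<union> set v \<subseteq> {1..k}" using uv st by auto
  have s2: "1 \<notin> set u \<union> set v" using d uv by auto
  have "\<forall>x\<in>set u \<union> set v. 2 \<le> x"
  proof
    fix x assume "x \<in> set u \<union> set v"
    then have "1 \<le> x" "x \<noteq> 1" using s1 s2 by auto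
    then show "2 \<le> x" by simp
  qed
  then have "\<forall>x\<in>set u. 2 \<le> x" "\<forall>x\<in>set v. 2 \<le> x" by auto
  then show ?thesis using uv by blast
qed

lemma perm_rng: "distinct (t::nat list) \<Longrightarrow> set t = {1..m} \<Longrightarrow> \<forall>x\<in>set t. 1 \<le> x \<and> x \<le> length t"
  using perm_len[of t m] by auto

lemma perm_ne: "set t = {1..m} \<Longrightarrow> 1 \<le> (m::nat) \<Longrightarrow> t \<noteq> []"
  by auto


context infl begin
lemma w_parts: "take p w = map sh u \<and> take m (drop p w) = t \<and> drop (p+m) w = map sh v"
  unfolding w_def p_def m_def by simp
end

lemma infl_of:
  assumes "\<sigma> \<in> Sset kk" "\<tau> \<in> A_set mm" "2 \<le> kk" "1 \<le> mm"
  shows "\<exists>u v. \<sigma> = u @ 1 # v \<and> infl u v \<tau>"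
proof -
  have s: "distinct \<sigma>" "set \<sigma> = {1..kk}" using assms(1) unfolding Sset_def A_set_def perm_iff by auto
  have t: "distinct \<tau>" "set \<tau> = {1..mm}" using assms(2) unfolding A_set_def perm_iff by auto
  obtain u v where uv: "\<sigma> = u @ 1 # v" "\<forall>x\<in>set u. 2 \<le> x" "\<forall>x\<in>set v. 2 \<le> x"
    using perm_split[OF s] assms(3) by auto
  have "infl u v \<tau>"
    by (unfold_locales) (use uv perm_rng[OF t] perm_ne[OF t(2) assms(4)] in auto)
  then show ?thesis using uv by blast
qed

lemma F_mem:
  assumes "\<sigma> \<in> Sset kk" "\<tau> \<in> A_set mm" "2 \<le> kk" "1 \<le> mm"
  shows "F (\<sigma>, \<tau>) \<in> A_set (kk + mm - 1)"
proof -
  obtain u v where uv: "\<sigma> = u @ 1 # v" and I: "infl u v \<tau>" using infl_of[OF assms] by blast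
  interpret I: infl u v \<tau> by (rule I)
  have sg: "I.sg = \<sigma>" using uv I.sg_def by simp
  have s: "distinct \<sigma>" "set \<sigma> = {1..kk}" "av \<sigma>" using assms(1) unfolding Sset_def A_set_def perm_iff av_eq by auto
  have t: "distinct \<tau>" "set \<tau> = {1..mm}" "av \<tau>" using assms(2) unfolding A_set_def perm_iff av_eq by auto
  have kk: "I.k = kk" using perm_len[OF s(1) s(2)] sg I.k_def by simp
  have mm: "I.m = mm" using perm_len[OF t(1) t(2)] I.m_def by simp
  have "distinct I.w \<and> set I.w = {1..I.n}" using I.w_perm s t sg kk mm by simp
  moreover have "av I.w" using I.A_w s t sg by simp
  moreover have "I.n = kk + mm - 1" using I.n_k kk mm by simp
  ultimately have "I.w \<in> A_set (kk + mm - 1)" unfolding A_set_def perm_iff av_eq by simp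
  then show ?thesis using F_infl[OF I] sg by simp
qed

lemma F_inj:
  assumes a1: "\<sigma>1 \<in> Sset k1" "\<tau>1 \<in> A_set m1" "2 \<le> k1" "1 \<le> m1"
    and a2: "\<sigma>2 \<in> Sset k2" "\<tau>2 \<in> A_set m2" "2 \<le> k2" "1 \<le> m2"
    and eq: "F (\<sigma>1, \<tau>1) = F (\<sigma>2, \<tau>2)"
  shows "\<sigma>1 = \<sigma>2 \<and> \<tau>1 = \<tau>2"
proof -
  obtain u1 v1 where uv1: "\<sigma>1 = u1 @ 1 # v1" and I1: "infl u1 v1 \<tau>1" using infl_of[OF a1] by blast
  obtain u2 v2 where uv2: "\<sigma>2 = u2 @ 1 # v2" and I2: "infl u2 v2 \<tau>2" using infl_of[OF a2] by blast
  interpret I1: infl u1 v1 \<tau>1 by (rule I1)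
  interpret I2: infl u2 v2 \<tau>2 by (rule I2)
  have sg1: "I1.sg = \<sigma>1" using uv1 I1.sg_def by simp
  have sg2: "I2.sg = \<sigma>2" using uv2 I2.sg_def by simp
  have s1: "distinct \<sigma>1" "set \<sigma>1 = {1..k1}" "is_simple \<sigma>1" using a1(1) unfolding Sset_def A_set_def perm_iff by auto
  have s2: "distinct \<sigma>2" "set \<sigma>2 = {1..k2}" "is_simple \<sigma>2" using a2(1) unfolding Sset_def A_set_def perm_iff by auto
  have k1: "I1.k = k1" using perm_len[OF s1(1) s1(2)] sg1 I1.k_def by simp
  have k2: "I2.k = k2" using perm_len[OF s2(1) s2(2)] sg2 I2.k_def by simp
  have W: "I1.w = I2.w" using eq F_infl[OF I1] F_infl[OF I2] sg1 sg2 by simp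
  then have nn: "I1.n = I2.n" using I1.n_def I2.n_def by simp
  have mlt: False if lt: "I1.m < I2.m" for u1' :: nat
  proof -
    have "block I1.w I2.m" using I2.block_m W by simp
    moreover have "I2.m < I1.n" using nn I2.n_k k2 a2(3) by simp
    ultimately have "\<exists>a b. intv I1.sg a b" using I1.no_bigger[of "I2.m"] s1 sg1 k1 lt by simp
    then show False using s1(3) sg1 unfolding simple_eq by simp
  qed
  have mlt2: False if lt: "I2.m < I1.m"
  proof -
    have "block I2.w I1.m" using I1.block_m W by simp
    moreover have "I1.m < I2.n" using nn I1.n_k k1 a1(3) by simp
    ultimately have "\<exists>a b. intv I2.sg a b" using I2.no_bigger[of "I1.m"] s2 sg2 k2 lt by simp
    then show False using s2(3) sg2 unfolding simple_eq by simp
  qed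
  have mm: "I1.m = I2.m" using mlt mlt2 by fastforce
  have p1: "I1.p < I1.n" using I1.n_eq I1.m_pos by simp
  have p2: "I2.p < I2.n" using I2.n_eq I2.m_pos by simp
  have "I1.w ! I1.p \<le> I1.m" using I1.blk_char[OF p1] I1.m_pos by simp
  then have "I2.p \<le> I1.p" using I2.blk_char[of "I1.p"] W mm nn p1 by simp
  moreover have "I2.w ! I2.p \<le> I2.m" using I2.blk_char[OF p2] I2.m_pos by simp
  then have "I1.p \<le> I2.p" using I1.blk_char[of "I2.p"] W mm nn p2 by simp
  ultimately have pp: "I1.p = I2.p" by simp
  have sh: "I1.sh = I2.sh" using mm unfolding I1.sh_def I2.sh_def by auto
  have "map I1.sh u1 = map I1.sh u2" using I1.w_parts I2.w_parts W pp sh by metis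
  then have u: "u1 = u2" using I1.sh_inj by (simp add: inj_map_eq_map)
  have "map I1.sh v1 = map I1.sh v2" using I1.w_parts I2.w_parts W pp sh mm by metis
  then have v: "v1 = v2" using I1.sh_inj by (simp add: inj_map_eq_map)
  have t: "\<tau>1 = \<tau>2" using I1.w_parts I2.w_parts W pp mm by metis
  show ?thesis using u v t uv1 uv2 by simp
qed


lemma F_surj:
  assumes wA: "w \<in> A_set nn" and n2: "2 \<le> nn"
  shows "\<exists>kk \<sigma> \<tau>. 2 \<le> kk \<and> kk \<le> nn \<and> \<sigma> \<in> Sset kk \<and> \<tau> \<in> A_set (nn + 1 - kk) \<and> w = F (\<sigma>, \<tau>)"
proof -
  have dw: "distinct w" "set w = {1..nn}" "av w" using wA unfolding A_set_def perm_iff av_eq by auto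
  have lw: "length w = nn" using perm_len[OF dw(1) dw(2)] .
  have val: "\<And>y. y < nn \<Longrightarrow> 1 \<le> w!y \<and> w!y \<le> nn"
  proof -
    fix y assume "y < nn"
    then have "w!y \<in> set w" using lw by auto
    then show "1 \<le> w!y \<and> w!y \<le> nn" using dw by auto
  qed
  have injw: "\<And>x y. x < nn \<Longrightarrow> y < nn \<Longrightarrow> w!x = w!y \<Longrightarrow> x = y"
    using dw(1) lw by (auto simp: nth_eq_iff_index_eq)
  define MS where "MS = {m'. 1 \<le> m' \<and> m' < nn \<and> block w m'}"
  have finMS: "finite MS" unfolding MS_def by (rule finite_subset[of _ "{..<nn}"]) auto
  have "1 \<in> MS"
  proof -
    have "1 \<in> set w" using dw n2 by auto
    then obtain q1 where q1: "q1 < nn" "w!q1 = 1" using lw by (auto simp: in_set_conv_nth)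
    have "\<forall>y<length w. w!y \<le> 1 \<longleftrightarrow> q1 \<le> y \<and> y < q1 + 1"
    proof (intro allI impI)
      fix y assume y: "y < length w"
      show "w!y \<le> 1 \<longleftrightarrow> q1 \<le> y \<and> y < q1 + 1"
      proof
        assume "w!y \<le> 1"
        then have "w!y = w!q1" using val[of y] y lw q1 by auto
        then have "y = q1" using injw[of y q1] y lw q1 by auto
        then show "q1 \<le> y \<and> y < q1 + 1" by simp
      next
        assume "q1 \<le> y \<and> y < q1 + 1"
        then have "y = q1" by simp
        then show "w!y \<le> 1" using q1 by simp
      qed
    qed
    then have "block w 1" unfolding block_def using q1 lw by (intro exI[of _ q1]) auto
    then show ?thesis unfolding MS_def using n2 by auto
  qed
  define m where "m = Max MS"
  have mMS: "m \<in> MS" using finMS \<open>1 \<in> MS\<close> unfolding m_def by (auto intro: Max_in)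
  have mmax: "\<And>m'. m' \<in> MS \<Longrightarrow> m' \<le> m" using finMS unfolding m_def by auto
  have m1: "1 \<le> m" "m < nn" using mMS unfolding MS_def by auto
  obtain q where q: "q + m \<le> nn" "\<And>y. y < nn \<Longrightarrow> w!y \<le> m \<longleftrightarrow> q \<le> y \<and> y < q + m"
    using mMS unfolding MS_def block_def lw by blast
  define t where "t = take m (drop q w)"
  define u where "u = map (\<lambda>x. x - (m-1)) (take q w)"
  define v where "v = map (\<lambda>x. x - (m-1)) (drop (q+m) w)"
  have lt: "length t = m" using q(1) lw unfolding t_def by simp
  have tk: "\<forall>x\<in>set (take q w). m < x"
  proof
    fix x assume "x \<in> set (take q w)"
    then obtain y where y: "y < length (take q w)" "take q w ! y = x" by (auto simp: in_set_conv_nth)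
    then have "y < q" "y < nn" "w!y = x" using lw by auto
    then show "m < x" using q(2)[of y] by (meson not_le not_less)
  qed
  have dk: "\<forall>x\<in>set (drop (q+m) w). m < x"
  proof
    fix x assume "x \<in> set (drop (q+m) w)"
    then obtain y where y: "y < length (drop (q+m) w)" "drop (q+m) w ! y = x" by (auto simp: in_set_conv_nth)
    then have "q + m + y < nn" "w!(q+m+y) = x" using lw by auto
    then show "m < x" using q(2)[of "q+m+y"] by auto
  qed
  have tr: "\<forall>x\<in>set t. 1 \<le> x \<and> x \<le> length t"
  proof
    fix x assume "x \<in> set t"
    then obtain y where y: "y < length t" "t ! y = x" by (auto simp: in_set_conv_nth)
    then have "q + y < nn" "w!(q+y) = x" "y < m" using lw lt q(1) unfolding t_def by auto
    then show "1 \<le> x \<and> x \<le> length t" using q(2)[of "q+y"] val[of "q+y"] lt by auto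
  qed
  have I: "infl u v t"
  proof
    show "t \<noteq> []" using lt m1 by auto
    show "\<forall>x\<in>set u. 2 \<le> x" using tk m1 unfolding u_def by auto
    show "\<forall>x\<in>set v. 2 \<le> x" using dk m1 unfolding v_def by auto
    show "\<forall>x\<in>set t. 1 \<le> x \<and> x \<le> length t" by (rule tr)
  qed
  interpret I: infl u v t by (rule I)
  have Im: "I.m = m" using lt I.m_def by simp
  have Ip: "I.p = q" using q(1) lw I.p_def unfolding u_def by simp
  have shid: "\<And>xs. \<forall>x\<in>set xs. m < x \<Longrightarrow> map I.sh (map (\<lambda>x. x - (m-1)) xs) = xs"
  proof -
    fix xs :: "nat list" assume h: "\<forall>x\<in>set xs. m < x"
    have "\<forall>x\<in>set xs. x - (m-1) + m - 1 = x" using h m1 by auto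
    then show "map I.sh (map (\<lambda>x. x - (m-1)) xs) = xs"
      unfolding I.sh_def Im by (induction xs) auto
  qed
  have "I.w = map I.sh u @ t @ map I.sh v" by (simp add: I.w_def)
  also have "\<dots> = take q w @ t @ drop (q+m) w"
    unfolding u_def v_def using shid[OF tk] shid[OF dk] by simp
  also have "\<dots> = take q w @ take m (drop q w) @ drop m (drop q w)"
    unfolding t_def by (simp add: add.commute)
  also have "\<dots> = w" by (simp only: append_take_drop_id)
  finally have Iw: "I.w = w" .
  have In: "I.n = nn" using Iw lw I.n_def by simp
  have perms: "distinct I.sg \<and> set I.sg = {1..I.k} \<and> distinct t \<and> set t = {1..I.m}"
    using I.perm_of_w Iw dw In by simp
  have avs: "av I.sg" "av t" using I.B_sg I.B_t Iw dw by auto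
  have iso: "\<not> (\<exists>a b. intv I.sg a b \<and> (\<exists>x\<in>{a..b}. I.sg!x = 1))"
  proof
    assume "\<exists>a b. intv I.sg a b \<and> (\<exists>x\<in>{a..b}. I.sg!x = 1)"
    then obtain a b x where ab: "intv I.sg a b" "x \<in> {a..b}" "I.sg!x = 1" by blast
    have "b < I.k" using ab(1) unfolding intv_def I.len_sg by simp
    then have xk: "x < I.k" "I.p < I.k" using ab(2) I.k_eq by auto
    have "I.sg ! x = I.sg ! I.p" using ab(3) I.sg_p by simp
    then have "x = I.p" using xk perms I.len_sg nth_eq_iff_index_eq by metis
    then have "a \<le> I.p" "I.p \<le> b" using ab by auto
    then have "block I.w (I.m + (b - a + 1) - 1) \<and> I.m < I.m + (b - a + 1) - 1 \<and> I.m + (b - a + 1) - 1 < I.n"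
      using I.bigger perms ab(1) by blast
    then have "m + (b - a + 1) - 1 \<in> MS" using Iw Im In m1 unfolding MS_def by auto
    then show False using mmax[of "m + (b - a + 1) - 1"] Im
      \<open>block I.w (I.m + (b - a + 1) - 1) \<and> I.m < I.m + (b - a + 1) - 1 \<and> I.m + (b - a + 1) - 1 < I.n\<close> by simp
  qed
  have simp: "is_simple I.sg"
    unfolding simple_eq using key_simple[of I.sg I.k] perms avs iso I.len_sg by blast
  have kk: "I.k = nn + 1 - m" "2 \<le> I.k" "I.k \<le> nn" using I.n_k In Im m1 by auto
  have "I.sg \<in> Sset I.k" unfolding Sset_def A_set_def perm_iff av_eq using perms avs simp by simp
  moreover have "t \<in> A_set (nn + 1 - I.k)" unfolding A_set_def perm_iff av_eq using perms avs kk Im m1 by simp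
  moreover have "w = F (I.sg, t)" using F_infl[OF I] Iw by simp
  ultimately show ?thesis using kk by blast
qed


lemma finite_A: "finite (A_set k)" unfolding A_set_def by simp
lemma finite_S: "finite (Sset k)" unfolding Sset_def using finite_A by simp

lemma Sset_len: "\<sigma> \<in> Sset k \<Longrightarrow> length \<sigma> = k"
  unfolding Sset_def A_set_def perm_iff using perm_len by auto

lemma a_rec:
  assumes n2: "2 \<le> nn"
  shows "a_seq nn = (\<Sum>k=2..nn. s_seq k * a_seq (nn + 1 - k))"
proof -
  define Sig where "Sig = (\<Union>k\<in>{2..nn}. Sset k \<times> A_set (nn + 1 - k))"
  have img: "F ` Sig = A_set nn"
  proof
    show "F ` Sig \<subseteq> A_set nn"
    proof
      fix w assume "w \<in> F ` Sig"
      then obtain k \<sigma> \<tau> where h: "k \<in> {2..nn}" "\<sigma> \<in> Sset k" "\<tau> \<in> A_set (nn + 1 - k)" "w = F (\<sigma>, \<tau>)"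
        unfolding Sig_def by blast
      then have "F (\<sigma>, \<tau>) \<in> A_set (k + (nn + 1 - k) - 1)" using F_mem[of \<sigma> k \<tau> "nn + 1 - k"] by auto
      moreover have "k + (nn + 1 - k) - 1 = nn" using h by auto
      ultimately show "w \<in> A_set nn" using h by simp
    qed
  next
    show "A_set nn \<subseteq> F ` Sig"
    proof
      fix w assume "w \<in> A_set nn"
      then obtain kk \<sigma> \<tau> where h: "2 \<le> kk" "kk \<le> nn" "\<sigma> \<in> Sset kk" "\<tau> \<in> A_set (nn + 1 - kk)" "w = F (\<sigma>, \<tau>)"
        using F_surj n2 by blast
      then have "(\<sigma>, \<tau>) \<in> Sig" unfolding Sig_def by auto
      then show "w \<in> F ` Sig" using h by auto
    qed
  qed
  have inj: "inj_on F Sig"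
  proof
    fix x y assume x: "x \<in> Sig" and y: "y \<in> Sig" and e: "F x = F y"
    obtain k1 \<sigma>1 \<tau>1 where h1: "k1 \<in> {2..nn}" "\<sigma>1 \<in> Sset k1" "\<tau>1 \<in> A_set (nn + 1 - k1)" "x = (\<sigma>1, \<tau>1)"
      using x unfolding Sig_def by blast
    obtain k2 \<sigma>2 \<tau>2 where h2: "k2 \<in> {2..nn}" "\<sigma>2 \<in> Sset k2" "\<tau>2 \<in> A_set (nn + 1 - k2)" "y = (\<sigma>2, \<tau>2)"
      using y unfolding Sig_def by blast
    have "\<sigma>1 = \<sigma>2 \<and> \<tau>1 = \<tau>2"
      by (rule F_inj[of \<sigma>1 k1 \<tau>1 "nn + 1 - k1" \<sigma>2 k2 \<tau>2 "nn + 1 - k2"]) (use h1 h2 e in auto)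
    then show "x = y" using h1 h2 by simp
  qed
  have "a_seq nn = card Sig" unfolding a_seq_def using card_image[OF inj] img by simp
  also have "\<dots> = (\<Sum>k\<in>{2..nn}. card (Sset k \<times> A_set (nn + 1 - k)))"
    unfolding Sig_def
  proof (rule card_UN_disjoint)
    show "finite {2..nn}" by simp
    show "\<forall>i\<in>{2..nn}. finite (Sset i \<times> A_set (nn + 1 - i))" using finite_A finite_S by auto
    show "\<forall>i\<in>{2..nn}. \<forall>j\<in>{2..nn}. i \<noteq> j \<longrightarrow> (Sset i \<times> A_set (nn + 1 - i)) \<inter> (Sset j \<times> A_set (nn + 1 - j)) = {}"
    proof (intro ballI impI)
      fix i j :: nat assume "i \<noteq> j"
      show "(Sset i \<times> A_set (nn + 1 - i)) \<inter> (Sset j \<times> A_set (nn + 1 - j)) = {}"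
      proof (rule ccontr)
        assume "(Sset i \<times> A_set (nn + 1 - i)) \<inter> (Sset j \<times> A_set (nn + 1 - j)) \<noteq> {}"
        then obtain a b where "a \<in> Sset i" "a \<in> Sset j" by blast
        then have "i = j" using Sset_len by metis
        then show False using \<open>i \<noteq> j\<close> by simp
      qed
    qed
  qed
  also have "\<dots> = (\<Sum>k=2..nn. s_seq k * a_seq (nn + 1 - k))"
    unfolding s_seq_def a_seq_def Sset_def[symmetric] by (simp add: card_cartesian_product)
  finally show ?thesis .
qed

definition C0 :: "nat \<Rightarrow> nat list set" where
  "C0 j = {xs. (\<forall>x\<in>set xs. 1 \<le> x) \<and> sum_list xs = j}"

definition hh :: "nat \<Rightarrow> nat" where
  "hh j = (\<Sum>xs\<in>C0 j. \<Prod>x\<leftarrow>xs. s_seq (x + 1))"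

lemma len_le_sum: "\<forall>x\<in>set xs. 1 \<le> x \<Longrightarrow> length xs \<le> sum_list (xs::nat list)"
  by (induction xs) auto

lemma mem_le_sum: "x \<in> set xs \<Longrightarrow> x \<le> sum_list (xs::nat list)"
  by (induction xs) auto

lemma finite_C0: "finite (C0 j)"
proof (rule finite_subset)
  show "C0 j \<subseteq> {xs. set xs \<subseteq> {1..j} \<and> length xs \<le> j}"
    unfolding C0_def using len_le_sum mem_le_sum by fastforce
  show "finite {xs. set xs \<subseteq> {1..j} \<and> length xs \<le> j}" by (rule finite_lists_length_le) simp
qed

lemma C0_0: "C0 0 = {[]}"
proof -
  have "\<And>xs. (\<forall>x\<in>set xs. 1 \<le> x) \<Longrightarrow> sum_list xs = 0 \<Longrightarrow> xs = ([]::nat list)"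
    by (case_tac xs) auto
  then show ?thesis unfolding C0_def by auto
qed

lemma hh_0: "hh 0 = 1" unfolding hh_def C0_0 by simp

lemma C0_split: assumes "1 \<le> j"
  shows "C0 j = (\<Union>x\<in>{1..j}. (\<lambda>ys. x # ys) ` C0 (j - x))"
proof
  show "C0 j \<subseteq> (\<Union>x\<in>{1..j}. (\<lambda>ys. x # ys) ` C0 (j - x))"
  proof
    fix xs assume xs: "xs \<in> C0 j"
    then obtain x ys where xy: "xs = x # ys" using assms unfolding C0_def by (cases xs) auto
    then have "ys \<in> C0 (j - x)" "x \<in> {1..j}" using xs unfolding C0_def by auto
    then show "xs \<in> (\<Union>x\<in>{1..j}. (\<lambda>ys. x # ys) ` C0 (j - x))" using xy by blast
  qed
next
  show "(\<Union>x\<in>{1..j}. (\<lambda>ys. x # ys) ` C0 (j - x)) \<subseteq> C0 j"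
    unfolding C0_def by auto
qed

lemma hh_rec: assumes "1 \<le> j"
  shows "hh j = (\<Sum>x=1..j. s_seq (x + 1) * hh (j - x))"
proof -
  have "hh j = (\<Sum>xs\<in>(\<Union>x\<in>{1..j}. (\<lambda>ys. x # ys) ` C0 (j - x)). \<Prod>x\<leftarrow>xs. s_seq (x + 1))"
    unfolding hh_def using C0_split[OF assms] by simp
  also have "\<dots> = (\<Sum>x\<in>{1..j}. \<Sum>xs\<in>(\<lambda>ys. x # ys) ` C0 (j - x). \<Prod>x\<leftarrow>xs. s_seq (x + 1))"
    by (rule sum.UNION_disjoint) (auto simp: finite_C0)
  also have "\<dots> = (\<Sum>x=1..j. s_seq (x + 1) * hh (j - x))"
  proof (rule sum.cong)
    fix x assume "x \<in> {1..j}"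
    have "(\<Sum>xs\<in>(\<lambda>ys. x # ys) ` C0 (j - x). \<Prod>x\<leftarrow>xs. s_seq (x + 1))
        = (\<Sum>ys\<in>C0 (j - x). \<Prod>x\<leftarrow>(x # ys). s_seq (x + 1))"
      by (rule sum.reindex_cong[of "\<lambda>ys. x # ys"]) (auto simp: inj_on_def)
    also have "\<dots> = s_seq (x + 1) * hh (j - x)" unfolding hh_def by (simp add: sum_distrib_left)
    finally show "(\<Sum>xs\<in>(\<lambda>ys. x # ys) ` C0 (j - x). \<Prod>x\<leftarrow>xs. s_seq (x + 1)) = s_seq (x + 1) * hh (j - x)" .
  qed simp
  finally show ?thesis .
qed

lemma a_1: "a_seq 1 = 1"
proof -
  have "A_set 1 = {[1]}" unfolding A_set_def av_eq av_def by (auto simp: P4_def)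
  then show ?thesis unfolding a_seq_def by simp
qed

lemma a_hh: "1 \<le> n \<Longrightarrow> a_seq n = hh (n - 1)"
proof (induction n rule: less_induct)
  case (less n)
  show ?case
  proof (cases "n = 1")
    case True
    then show ?thesis using a_1 hh_0 by simp
  next
    case False
    then have n2: "2 \<le> n" using less.prems by simp
    have "a_seq n = (\<Sum>k=2..n. s_seq k * a_seq (n + 1 - k))" by (rule a_rec[OF n2])
    also have "\<dots> = (\<Sum>x=1..n-1. s_seq (x + 1) * a_seq (n - x))"
    proof -
      have "{2..n} = {Suc 1..Suc (n-1)}" using n2 by simp
      then show ?thesis by (simp only: sum.shift_bounds_cl_Suc_ivl) simp
    qed
    also have "\<dots> = (\<Sum>x=1..n-1. s_seq (x + 1) * hh (n - 1 - x))"
    proof (rule sum.cong)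
      fix x assume "x \<in> {1..n-1}"
      then have "a_seq (n - x) = hh (n - x - 1)" using less.IH[of "n - x"] by auto
      then show "s_seq (x + 1) * a_seq (n - x) = s_seq (x + 1) * hh (n - 1 - x)" by simp
    qed simp
    also have "\<dots> = hh (n - 1)" using hh_rec[of "n-1"] n2 by simp
    finally show ?thesis .
  qed
qed

theorem mainTheorem16:
  fixes n :: nat
  assumes "n \<ge> 2"
  shows "a_seq n = (\<Sum>xs\<in>compositions (n - 1). \<Prod>x\<leftarrow>xs. s_seq (x + 1))"
proof -
  have "compositions (n - 1) = C0 (n - 1)"
    unfolding compositions_def C0_def using assms by auto
  then show ?thesis using a_hh[of n] assms unfolding hh_def by simp
qed


end
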